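(* Let $\mathbf{x}\in(\Sigma^* )^\circ$ be arbitrary and let $\mathbf{s}\in\mathbb{R}^U$. Define the block-diagonal symmetric matrix \[ \mathbf{S}(\mathbf{x},\mathbf{s}) := \Lambda(\mathbf{x})^{-1}\,\Lambda\!\left(H(\mathbf{x})^{-1}\mathbf{s}\right)\Lambda(\mathbf{x})^{-1}. \] Then $\Lambda^*(\mathbf{S}(\mathbf{x},\mathbf{s}))=\mathbf{s}$. Moreover, for $\mathbf{s}\in\Sigma$, $\mathbf{x}$ is a dual certificate of $\mathbf{s}$ (i.e. $H(\mathbf{x})^{-1}\mathbf{s}\in\Sigma^*$) if and only if $\mathbf{S}(\mathbf{x},\mathbf{s})\succeq \mathbf{0}$.
   Context: Fix nonzero real polynomials $g_1,\dots,g_m$ in $n$ variables and nonnegative integers $d_1,\dots,d_m$. Let $\mathcal V$ be the real vector space of polynomials of the form $\sum_{i=1}^m g_i r_i$ with each $r_i$ a polynomial of degree at most $2d_i$, and let $\Sigma\subseteq\mathcal V$ be the cone of weighted sums of squares $\sum_{i=1}^m g_i\sigma_i$, where each $\sigma_i$ is a sum of squares of polynomials of degree at most $d_i$. Assume $\Sigma$ is a proper cone (closed, convex, pointed, full-dimensional in $\mathcal V$). Fix an ordered basis $\mathbf q=(q_1,\dots,q_U)$ of $\mathcal V$ and identify $\mathcal V$ and its dual with $\mathbb R^U$ (coefficient vectors), with the standard inner product and Euclidean norm $\|\cdot\|$; $\Sigma^*=\{\mathbf x:\mathbf x^T\mathbf s\ge 0\ \forall \mathbf s\in\Sigma\}$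 is the dual cone and $K^\circ$ denotes the interior of $K$. For each $i$ fix an ordered basis $\mathbf p_i=(p_{i,1},\dots,p_{i,L_i})$ of the polynomials of degree at most $d_i$, and let $\Lambda_i:\mathbb R^U\to\mathbb S^{L_i}$ be the unique linear map with $\sum_{u=1}^U q_u\Lambda_i(\mathbf e_u)=g_i\mathbf p_i\mathbf p_i^T$ (as matrices of polynomials). Let $\Lambda=\Lambda_1\oplus\cdots\oplus\Lambda_m$, mapping $\mathbb R^U$ into block-diagonal symmetric matrices, and $\Lambda^*$ its adjoint with respect to the trace inner product. Then $\Sigma^*=\{\mathbf x:\Lambda(\mathbf x)\succeq 0\}$ and $(\Sigma^* )^\circ=\{\mathbf x:\Lambda(\mathbf x)\succ0\}$. Let $f(\mathbf x)=-\ln\det\Lambda(\mathbf x)$ on $(\Sigma^* )^\circ$; its Hessian $H(\mathbf x)$ is the positive definite operator $H(\mathbf x)\mathbf w=\Lambda^*(\Lambda(\mathbf x)^{-1}\Lambda(\mathbf w)\Lambda(\mathbf x)^{-1})$. A vector $\mathbf x\in(\Sigma^* )^\circ$ is called a dual certificate of $\mathbf s\in\Sigma$ if $H(\mathbf x)^{-1}\mathbf s\in\Sigma^*$. *)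

theory Defs
  imports "HOL-Analysis.Analysis" "Jordan_Normal_Form.Matrix"
begin

text \<open>Points of R^n are functions 'n => real ('n finite); real polynomial functions in n
  variables are represented by their (polynomial) functions R^n -> R.  Coefficient vectors
  in R^U are functions 'u => real ('u finite, CARD('u) = U), with the product (= Euclidean)
  topology.\<close>

definition monomial :: "('n::finite \<Rightarrow> nat) \<Rightarrow> ('n \<Rightarrow> real) \<Rightarrow> real" where
  "monomial \<alpha> z = (\<Prod>i\<in>UNIV. z i ^ \<alpha> i)"

definition exps_le :: "nat \<Rightarrow> ('n::finite \<Rightarrow> nat) set" where
  "exps_le d = {\<alpha>. (\<Sum>i\<in>UNIV. \<alpha> i) \<le> d}"

definition poly_deg_le :: "nat \<Rightarrow> (('n::finite \<Rightarrow> real) \<Rightarrow> real) \<Rightarrow> bool" where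
  "poly_deg_le d f \<longleftrightarrow> (\<exists>c. f = (\<lambda>z. \<Sum>\<alpha>\<in>exps_le d. c \<alpha> * monomial \<alpha> z))"

definition is_poly :: "(('n::finite \<Rightarrow> real) \<Rightarrow> real) \<Rightarrow> bool" where
  "is_poly f \<longleftrightarrow> (\<exists>d. poly_deg_le d f)"

definition sos_deg_le :: "nat \<Rightarrow> (('n::finite \<Rightarrow> real) \<Rightarrow> real) \<Rightarrow> bool" where
  "sos_deg_le d \<sigma> \<longleftrightarrow>
     (\<exists>hs. (\<forall>h\<in>set hs. poly_deg_le d h) \<and> \<sigma> = (\<lambda>z. \<Sum>h\<leftarrow>hs. (h z)\<^sup>2))"

definition Vspace :: "(nat \<Rightarrow> ('n::finite \<Rightarrow> real) \<Rightarrow> real) \<Rightarrow> (nat \<Rightarrow> nat) \<Rightarrow> nat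
    \<Rightarrow> (('n \<Rightarrow> real) \<Rightarrow> real) set" where
  "Vspace g d m = {f. \<exists>r. (\<forall>i<m. poly_deg_le (2 * d i) (r i)) \<and>
                          f = (\<lambda>z. \<Sum>i<m. g i z * r i z)}"

definition WSOS :: "(nat \<Rightarrow> ('n::finite \<Rightarrow> real) \<Rightarrow> real) \<Rightarrow> (nat \<Rightarrow> nat) \<Rightarrow> nat
    \<Rightarrow> (('n \<Rightarrow> real) \<Rightarrow> real) set" where
  "WSOS g d m = {f. \<exists>\<sigma>. (\<forall>i<m. sos_deg_le (d i) (\<sigma> i)) \<and>
                          f = (\<lambda>z. \<Sum>i<m. g i z * \<sigma> i z)}"

definition poly_of :: "('u::finite \<Rightarrow> ('n \<Rightarrow> real) \<Rightarrow> real) \<Rightarrow> ('u \<Rightarrow> real)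
    \<Rightarrow> ('n \<Rightarrow> real) \<Rightarrow> real" where
  "poly_of q s = (\<lambda>z. \<Sum>u\<in>UNIV. s u * q u z)"

definition is_basis_fun :: "('u::finite \<Rightarrow> ('n \<Rightarrow> real) \<Rightarrow> real)
    \<Rightarrow> (('n \<Rightarrow> real) \<Rightarrow> real) set \<Rightarrow> bool" where
  "is_basis_fun q V \<longleftrightarrow> (\<forall>u. q u \<in> V) \<and> (\<forall>f\<in>V. \<exists>s. f = poly_of q s) \<and>
     (\<forall>s. poly_of q s = (\<lambda>z. 0) \<longrightarrow> s = (\<lambda>u. 0))"

definition is_basis_list :: "(('n \<Rightarrow> real) \<Rightarrow> real) list
    \<Rightarrow> ((('n \<Rightarrow> real) \<Rightarrow> real) \<Rightarrow> bool) \<Rightarrow> bool" where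
  "is_basis_list B P \<longleftrightarrow> (\<forall>b\<in>set B. P b) \<and>
     (\<forall>f. P f \<longrightarrow> (\<exists>c. f = (\<lambda>z. \<Sum>j<length B. c j * (B ! j) z))) \<and>
     (\<forall>c. (\<lambda>z. \<Sum>j<length B. c j * (B ! j) z) = (\<lambda>z. 0) \<longrightarrow> (\<forall>j<length B. c j = 0))"

definition coords :: "('u::finite \<Rightarrow> ('n \<Rightarrow> real) \<Rightarrow> real) \<Rightarrow> (('n \<Rightarrow> real) \<Rightarrow> real)
    \<Rightarrow> 'u \<Rightarrow> real" where
  "coords q f = (THE s. f = poly_of q s)"

text \<open>Lambda_i: the linear map with sum_u q_u Lambda_i(e_u) = g_i p_i p_i^T\<close>
definition Lam_i :: "(nat \<Rightarrow> ('n::finite \<Rightarrow> real) \<Rightarrow> real) \<Rightarrow> (nat \<Rightarrow> (('n \<Rightarrow> real) \<Rightarrow> real) list)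
    \<Rightarrow> ('u::finite \<Rightarrow> ('n \<Rightarrow> real) \<Rightarrow> real) \<Rightarrow> nat \<Rightarrow> ('u \<Rightarrow> real) \<Rightarrow> real mat" where
  "Lam_i g p q i x = mat (length (p i)) (length (p i))
     (\<lambda>(j, k). \<Sum>u\<in>UNIV. x u * coords q (\<lambda>z. g i z * (p i ! j) z * (p i ! k) z) u)"

definition Lam :: "(nat \<Rightarrow> ('n::finite \<Rightarrow> real) \<Rightarrow> real) \<Rightarrow> (nat \<Rightarrow> (('n \<Rightarrow> real) \<Rightarrow> real) list)
    \<Rightarrow> ('u::finite \<Rightarrow> ('n \<Rightarrow> real) \<Rightarrow> real) \<Rightarrow> nat \<Rightarrow> ('u \<Rightarrow> real) \<Rightarrow> real mat" where
  "Lam g p q m x = diag_block_mat (map (\<lambda>i. Lam_i g p q i x) [0..<m])"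

definition unit_coord :: "'u \<Rightarrow> 'u \<Rightarrow> real" where
  "unit_coord u = (\<lambda>v. if v = u then 1 else 0)"

definition trace_mat :: "real mat \<Rightarrow> real" where
  "trace_mat A = (\<Sum>i<dim_row A. A $$ (i, i))"

text \<open>adjoint of Lambda w.r.t. the trace inner product <A,B> = tr(A^T B) and the standard
  inner product on R^U: (Lambda^* S)_u = <Lambda(e_u), S>\<close>
definition Lam_adj :: "(nat \<Rightarrow> ('n::finite \<Rightarrow> real) \<Rightarrow> real) \<Rightarrow> (nat \<Rightarrow> (('n \<Rightarrow> real) \<Rightarrow> real) list)
    \<Rightarrow> ('u::finite \<Rightarrow> ('n \<Rightarrow> real) \<Rightarrow> real) \<Rightarrow> nat \<Rightarrow> real mat \<Rightarrow> 'u \<Rightarrow> real" where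
  "Lam_adj g p q m S = (\<lambda>u. trace_mat (transpose_mat (Lam g p q m (unit_coord u)) * S))"

definition minv :: "real mat \<Rightarrow> real mat" where
  "minv A = (SOME B. inverts_mat A B \<and> inverts_mat B A)"

text \<open>Hessian of -ln det Lambda(x): H(x) w = Lambda^*(Lambda(x)^-1 Lambda(w) Lambda(x)^-1)\<close>
definition Hop :: "(nat \<Rightarrow> ('n::finite \<Rightarrow> real) \<Rightarrow> real) \<Rightarrow> (nat \<Rightarrow> (('n \<Rightarrow> real) \<Rightarrow> real) list)
    \<Rightarrow> ('u::finite \<Rightarrow> ('n \<Rightarrow> real) \<Rightarrow> real) \<Rightarrow> nat \<Rightarrow> ('u \<Rightarrow> real) \<Rightarrow> ('u \<Rightarrow> real) \<Rightarrow> 'u \<Rightarrow> real" where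
  "Hop g p q m x w = Lam_adj g p q m
      (minv (Lam g p q m x) * Lam g p q m w * minv (Lam g p q m x))"

definition Hinv :: "(nat \<Rightarrow> ('n::finite \<Rightarrow> real) \<Rightarrow> real) \<Rightarrow> (nat \<Rightarrow> (('n \<Rightarrow> real) \<Rightarrow> real) list)
    \<Rightarrow> ('u::finite \<Rightarrow> ('n \<Rightarrow> real) \<Rightarrow> real) \<Rightarrow> nat \<Rightarrow> ('u \<Rightarrow> real) \<Rightarrow> ('u \<Rightarrow> real) \<Rightarrow> 'u \<Rightarrow> real" where
  "Hinv g p q m x s = (THE w. Hop g p q m x w = s)"

definition Smat :: "(nat \<Rightarrow> ('n::finite \<Rightarrow> real) \<Rightarrow> real) \<Rightarrow> (nat \<Rightarrow> (('n \<Rightarrow> real) \<Rightarrow> real) list)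
    \<Rightarrow> ('u::finite \<Rightarrow> ('n \<Rightarrow> real) \<Rightarrow> real) \<Rightarrow> nat \<Rightarrow> ('u \<Rightarrow> real) \<Rightarrow> ('u \<Rightarrow> real) \<Rightarrow> real mat" where
  "Smat g p q m x s = minv (Lam g p q m x) * Lam g p q m (Hinv g p q m x s) * minv (Lam g p q m x)"

definition Scone :: "(nat \<Rightarrow> ('n::finite \<Rightarrow> real) \<Rightarrow> real) \<Rightarrow> (nat \<Rightarrow> nat) \<Rightarrow> nat
    \<Rightarrow> ('u::finite \<Rightarrow> ('n \<Rightarrow> real) \<Rightarrow> real) \<Rightarrow> ('u \<Rightarrow> real) set" where
  "Scone g d m q = {s. poly_of q s \<in> WSOS g d m}"

definition Sdual :: "(nat \<Rightarrow> ('n::finite \<Rightarrow> real) \<Rightarrow> real) \<Rightarrow> (nat \<Rightarrow> nat) \<Rightarrow> nat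
    \<Rightarrow> ('u::finite \<Rightarrow> ('n \<Rightarrow> real) \<Rightarrow> real) \<Rightarrow> ('u \<Rightarrow> real) set" where
  "Sdual g d m q = {x. \<forall>s\<in>Scone g d m q. (\<Sum>u\<in>UNIV. x u * s u) \<ge> 0}"

definition proper_cone :: "('u::finite \<Rightarrow> real) set \<Rightarrow> bool" where
  "proper_cone C \<longleftrightarrow> closed C \<and>
     (\<forall>a\<in>C. \<forall>b\<in>C. \<forall>t::real. 0 \<le> t \<and> t \<le> 1 \<longrightarrow> (\<lambda>u. t * a u + (1 - t) * b u) \<in> C) \<and>
     (\<forall>a\<in>C. \<forall>t::real. 0 \<le> t \<longrightarrow> (\<lambda>u. t * a u) \<in> C) \<and>
     (\<forall>a. a \<in> C \<and> (\<lambda>u. - a u) \<in> C \<longrightarrow> a = (\<lambda>u. 0)) \<and>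
     interior C \<noteq> {}"

definition psd :: "real mat \<Rightarrow> bool" where
  "psd A \<longleftrightarrow> A \<in> carrier_mat (dim_row A) (dim_row A) \<and> transpose_mat A = A \<and>
     (\<forall>v\<in>carrier_vec (dim_row A). v \<bullet> (A *\<^sub>v v) \<ge> 0)"

end

theory Submission
  imports Defs "HOL-Computational_Algebra.Polynomial" "Jordan_Normal_Form.Determinant"
begin

lemma finite_exps_le: "finite (exps_le d :: ('n::finite \<Rightarrow> nat) set)"
proof -
  have "exps_le d \<subseteq> (PiE (UNIV::'n set) (\<lambda>_. {..d}))"
  proof
    fix \<alpha> :: "'n \<Rightarrow> nat" assume "\<alpha> \<in> exps_le d"
    hence s: "(\<Sum>i\<in>UNIV. \<alpha> i) \<le> d" by (simp add: exps_le_def)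
    have "\<alpha> i \<le> d" for i
      using member_le_sum[of i UNIV \<alpha>] s by simp
    thus "\<alpha> \<in> PiE UNIV (\<lambda>_. {..d})" by auto
  qed
  moreover have "finite (PiE (UNIV::'n set) (\<lambda>_. {..d}))" by (rule finite_PiE) auto
  ultimately show ?thesis by (rule finite_subset)
qed

lemma pdl_zero: "poly_deg_le d (\<lambda>z. 0)"
  unfolding poly_deg_le_def by (rule exI[of _ "\<lambda>_. 0"]) simp

lemma pdl_add: assumes "poly_deg_le d f" "poly_deg_le d g" shows "poly_deg_le d (\<lambda>z. f z + g z)"
proof -
  obtain c where c: "f = (\<lambda>z. \<Sum>\<alpha>\<in>exps_le d. c \<alpha> * monomial \<alpha> z)" using assms(1) poly_deg_le_def by blast
  obtain c' where c': "g = (\<lambda>z. \<Sum>\<alpha>\<in>exps_le d. c' \<alpha> * monomial \<alpha> z)" using assms(2) poly_deg_le_def by blast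
  show ?thesis unfolding poly_deg_le_def c c'
    by (rule exI[of _ "\<lambda>a. c a + c' a"]) (simp add: distrib_right sum.distrib)
qed

lemma pdl_scale: assumes "poly_deg_le d f" shows "poly_deg_le d (\<lambda>z. a * f z)"
proof -
  obtain c where c: "f = (\<lambda>z. \<Sum>\<alpha>\<in>exps_le d. c \<alpha> * monomial \<alpha> z)" using assms(1) poly_deg_le_def by blast
  show ?thesis unfolding poly_deg_le_def c
    by (rule exI[of _ "\<lambda>b. a * c b"]) (simp add: sum_distrib_left mult.assoc)
qed

lemma pdl_sum: "(\<And>a. a \<in> A \<Longrightarrow> poly_deg_le d (f a)) \<Longrightarrow> poly_deg_le d (\<lambda>z. \<Sum>a\<in>A. f a z)"
proof (induction A rule: infinite_finite_induct)
  case (infinite A) thus ?case by (simp add: pdl_zero)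
next
  case empty thus ?case by (simp add: pdl_zero)
next
  case (insert x F) thus ?case by (simp add: pdl_add)
qed

lemma pdl_monomial: "\<alpha> \<in> exps_le d \<Longrightarrow> poly_deg_le d (monomial \<alpha>)"
  unfolding poly_deg_le_def
proof (rule exI[of _ "\<lambda>\<beta>. if \<beta> = \<alpha> then 1 else 0"], rule ext)
  fix z assume a: "\<alpha> \<in> exps_le d"
  have "(\<Sum>\<beta>\<in>exps_le d. (if \<beta> = \<alpha> then 1 else 0) * monomial \<beta> z) = (\<Sum>\<beta>\<in>exps_le d. if \<beta> = \<alpha> then monomial \<beta> z else 0)"
    by (rule sum.cong) auto
  also have "\<dots> = monomial \<alpha> z" using a by (simp add: finite_exps_le)
  finally show "monomial \<alpha> z = (\<Sum>\<beta>\<in>exps_le d. (if \<beta> = \<alpha> then 1 else 0) * monomial \<beta> z)" by simp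
qed

lemma monomial_mult: "monomial \<alpha> z * monomial \<beta> z = monomial (\<lambda>i. \<alpha> i + \<beta> i) z"
  unfolding monomial_def by (simp add: power_add prod.distrib)

lemma pdl_mult: fixes f g :: "('n::finite \<Rightarrow> real) \<Rightarrow> real" assumes "poly_deg_le d f" "poly_deg_le e g"
  shows "poly_deg_le (d + e) (\<lambda>z. f z * g z)"
proof -
  obtain c where c: "f = (\<lambda>z. \<Sum>\<alpha>\<in>exps_le d. c \<alpha> * monomial \<alpha> z)" using assms(1) poly_deg_le_def by blast
  obtain c' where c': "g = (\<lambda>z. \<Sum>\<alpha>\<in>exps_le e. c' \<alpha> * monomial \<alpha> z)" using assms(2) poly_deg_le_def by blast
  have eq: "(\<lambda>z. f z * g z) = (\<lambda>z. \<Sum>\<alpha>\<in>exps_le d. \<Sum>\<beta>\<in>exps_le e. (c \<alpha> * c' \<beta>) * monomial (\<lambda>i. \<alpha> i + \<beta> i) z)"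
    unfolding c c' sum_product by (intro ext sum.cong refl) (simp add: monomial_mult[symmetric] mult_ac)
  show ?thesis unfolding eq
  proof (intro pdl_sum pdl_scale pdl_monomial)
    fix \<alpha> \<beta> :: "'n \<Rightarrow> nat" assume "\<alpha> \<in> exps_le d" "\<beta> \<in> exps_le e"
    thus "(\<lambda>i. \<alpha> i + \<beta> i) \<in> exps_le (d + e)" by (simp add: exps_le_def sum.distrib)
  qed
qed

lemma pdl_sum_list: "(\<And>h. h \<in> set hs \<Longrightarrow> poly_deg_le d (f h)) \<Longrightarrow> poly_deg_le d (\<lambda>z. \<Sum>h\<leftarrow>hs. f h z)"
  by (induction hs) (auto simp: pdl_zero pdl_add)

lemma sos_pdl: "sos_deg_le d \<sigma> \<Longrightarrow> poly_deg_le (2 * d) \<sigma>"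
  unfolding sos_deg_le_def
  by (auto simp: power2_eq_square mult_2 intro!: pdl_sum_list pdl_mult)

lemma pdl_line: assumes "poly_deg_le d f"
  shows "\<exists>P. \<forall>t. f (\<lambda>i. a i + t * c i) = poly P t"
proof -
  obtain cc where cc: "f = (\<lambda>z. \<Sum>\<alpha>\<in>exps_le d. cc \<alpha> * monomial \<alpha> z)" using assms poly_deg_le_def by blast
  let ?P = "\<Sum>\<alpha>\<in>exps_le d. Polynomial.smult (cc \<alpha>) (\<Prod>i\<in>UNIV. [:a i, c i:] ^ \<alpha> i)"
  have "f (\<lambda>i. a i + t * c i) = poly ?P t" for t
    unfolding cc by (simp add: poly_sum poly_prod monomial_def mult.commute)
  thus ?thesis by blast
qed

lemma poly_fun_mult_nz:
  assumes "is_poly f" "is_poly g" "f \<noteq> (\<lambda>z. 0)" "g \<noteq> (\<lambda>z. 0)"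
  shows "(\<lambda>z. f z * g z) \<noteq> (\<lambda>z. 0)"
proof -
  obtain a where a: "f a \<noteq> 0" using assms(3) by auto
  obtain b where b: "g b \<noteq> 0" using assms(4) by auto
  obtain d1 d2 where d: "poly_deg_le d1 f" "poly_deg_le d2 g" using assms(1,2) is_poly_def by blast
  obtain P where P: "\<forall>t. f (\<lambda>i. a i + t * (b i - a i)) = poly P t" using pdl_line[OF d(1), of a "\<lambda>i. b i - a i"] by blast
  obtain Q where Q: "\<forall>t. g (\<lambda>i. a i + t * (b i - a i)) = poly Q t" using pdl_line[OF d(2), of a "\<lambda>i. b i - a i"] by blast
  have "poly P 0 \<noteq> 0" using P[rule_format, of 0] a by simp
  hence P0: "P \<noteq> 0" by auto
  have "poly Q 1 \<noteq> 0" using Q[rule_format, of 1] b by simp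
  hence Q0: "Q \<noteq> 0" by auto
  have "P * Q \<noteq> 0" using P0 Q0 by simp
  then obtain t where t: "poly (P * Q) t \<noteq> 0" using poly_all_0_iff_0 by blast
  show ?thesis
  proof
    assume "(\<lambda>z. f z * g z) = (\<lambda>z. 0)"
    hence "f (\<lambda>i. a i + t * (b i - a i)) * g (\<lambda>i. a i + t * (b i - a i)) = 0" by metis
    thus False using t P Q by simp
  qed
qed

definition qf :: "nat \<Rightarrow> (nat \<Rightarrow> nat \<Rightarrow> real) \<Rightarrow> (nat \<Rightarrow> real) \<Rightarrow> real" where
  "qf n M v = (\<Sum>i<n. \<Sum>j<n. v i * M i j * v j)"

definition ent :: "real mat \<Rightarrow> nat \<Rightarrow> nat \<Rightarrow> real" where
  "ent A i j = A $$ (i, j)"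

definition lf :: "('u::finite \<Rightarrow> ('n \<Rightarrow> real) \<Rightarrow> real) \<Rightarrow> ('u \<Rightarrow> real) \<Rightarrow> (('n \<Rightarrow> real) \<Rightarrow> real) \<Rightarrow> real" where
  "lf q x f = (\<Sum>u\<in>UNIV. x u * coords q f u)"

lemma poly_of_diff: "poly_of q (\<lambda>u. s u - t u) = (\<lambda>z. poly_of q s z - poly_of q t z)"
  unfolding poly_of_def by (simp add: sum_subtractf left_diff_distrib)

lemma poly_of_inj: assumes "is_basis_fun q V" "poly_of q s = poly_of q t" shows "s = t"
proof -
  have "poly_of q (\<lambda>u. s u - t u) = (\<lambda>z. 0)" using assms(2) by (simp add: poly_of_diff)
  hence "(\<lambda>u. s u - t u) = (\<lambda>u. 0)" using assms(1) unfolding is_basis_fun_def by blast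
  show ?thesis
  proof
    fix u show "s u = t u" using fun_cong[OF \<open>(\<lambda>u. s u - t u) = (\<lambda>u. 0)\<close>, of u] by simp
  qed
qed

lemma coords_poly_of: assumes "is_basis_fun q V" shows "coords q (poly_of q s) = s"
  unfolding coords_def
proof (rule the_equality)
  show "poly_of q s = poly_of q s" by (rule refl)
next
  fix x assume "poly_of q s = poly_of q x"
  thus "x = s" by (intro poly_of_inj[OF assms]) (rule sym)
qed

lemma poly_of_coords: assumes "is_basis_fun q V" "f \<in> V" shows "poly_of q (coords q f) = f"
proof -
  obtain s where "f = poly_of q s" using assms unfolding is_basis_fun_def by blast
  thus ?thesis using coords_poly_of[OF assms(1)] by simp
qed

lemma coords_sum: assumes "is_basis_fun q V" "\<And>a. a \<in> A \<Longrightarrow> f a \<in> V" "finite A"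
  shows "coords q (\<lambda>z. \<Sum>a\<in>A. c a * f a z) = (\<lambda>u. \<Sum>a\<in>A. c a * coords q (f a) u)"
proof -
  have "poly_of q (\<lambda>u. \<Sum>a\<in>A. c a * coords q (f a) u) = (\<lambda>z. \<Sum>a\<in>A. c a * poly_of q (coords q (f a)) z)"
    unfolding poly_of_def
  proof (rule ext)
    fix z
    have "(\<Sum>u\<in>UNIV. (\<Sum>a\<in>A. c a * coords q (f a) u) * q u z) = (\<Sum>u\<in>UNIV. \<Sum>a\<in>A. c a * (coords q (f a) u * q u z))"
      by (simp add: sum_distrib_right mult.assoc)
    also have "\<dots> = (\<Sum>a\<in>A. \<Sum>u\<in>UNIV. c a * (coords q (f a) u * q u z))" by (rule sum.swap)
    also have "\<dots> = (\<Sum>a\<in>A. c a * (\<Sum>u\<in>UNIV. coords q (f a) u * q u z))" by (simp add: sum_distrib_left)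
    finally show "(\<Sum>u\<in>UNIV. (\<Sum>a\<in>A. c a * coords q (f a) u) * q u z) = (\<Sum>a\<in>A. c a * (\<Sum>u\<in>UNIV. coords q (f a) u * q u z))" .
  qed
  also have "\<dots> = (\<lambda>z. \<Sum>a\<in>A. c a * f a z)"
  proof (rule ext, rule sum.cong[OF refl])
    fix z a assume "a \<in> A"
    show "c a * poly_of q (coords q (f a)) z = c a * f a z" using poly_of_coords[OF assms(1) assms(2)[OF \<open>a \<in> A\<close>]] by simp
  qed
  finally have "poly_of q (\<lambda>u. \<Sum>a\<in>A. c a * coords q (f a) u) = (\<lambda>z. \<Sum>a\<in>A. c a * f a z)" .
  from arg_cong[OF this, of "coords q"] show ?thesis unfolding coords_poly_of[OF assms(1)] by (rule sym)
qed

lemma V_zero: "(\<lambda>z. 0) \<in> Vspace g d m"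
  unfolding Vspace_def by (auto intro!: exI[of _ "\<lambda>_ _. 0"] pdl_zero)

lemma V_add: assumes "f \<in> Vspace g d m" "f' \<in> Vspace g d m" shows "(\<lambda>z. f z + f' z) \<in> Vspace g d m"
proof -
  obtain r where r: "\<forall>i<m. poly_deg_le (2 * d i) (r i)" "f = (\<lambda>z. \<Sum>i<m. g i z * r i z)"
    using assms(1) unfolding Vspace_def by blast
  obtain r' where r': "\<forall>i<m. poly_deg_le (2 * d i) (r' i)" "f' = (\<lambda>z. \<Sum>i<m. g i z * r' i z)"
    using assms(2) unfolding Vspace_def by blast
  show ?thesis unfolding Vspace_def
    by (rule CollectI, rule exI[of _ "\<lambda>i z. r i z + r' i z"])
       (auto simp: r r' pdl_add distrib_left sum.distrib)
qed

lemma V_scale: assumes "f \<in> Vspace g d m" shows "(\<lambda>z. a * f z) \<in> Vspace g d m"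
proof -
  obtain r where r: "\<forall>i<m. poly_deg_le (2 * d i) (r i)" "f = (\<lambda>z. \<Sum>i<m. g i z * r i z)"
    using assms(1) unfolding Vspace_def by blast
  show ?thesis unfolding Vspace_def
    by (rule CollectI, rule exI[of _ "\<lambda>i z. a * r i z"])
       (auto simp: r pdl_scale sum_distrib_left mult.left_commute)
qed

lemma V_sum: assumes "\<And>a. a \<in> A \<Longrightarrow> f a \<in> Vspace g d m"
  shows "(\<lambda>z. \<Sum>a\<in>A. c a * f a z) \<in> Vspace g d m"
  using assms
proof (induction A rule: infinite_finite_induct)
  case (infinite A) thus ?case by (simp add: V_zero)
next
  case empty thus ?case by (simp add: V_zero)
next
  case (insert x F)
  have "(\<lambda>z. \<Sum>a\<in>F. c a * f a z) \<in> Vspace g d m" using insert.IH insert.prems by auto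
  from V_add[OF V_scale[OF insert.prems[of x]] this] show ?case using insert by simp
qed

lemma V_single: assumes "i < m" "poly_deg_le (2 * d i) r" shows "(\<lambda>z. g i z * r z) \<in> Vspace g d m"
  unfolding Vspace_def
proof (rule CollectI, rule exI[of _ "\<lambda>k z. if k = i then r z else 0"], intro conjI allI impI)
  fix k assume "k < m"
  show "poly_deg_le (2 * d k) (\<lambda>z. if k = i then r z else 0)"
    using assms(2) by (cases "k = i") (auto simp: pdl_zero)
next
  show "(\<lambda>z. g i z * r z) = (\<lambda>z. \<Sum>k<m. g k z * (if k = i then r z else 0))"
  proof
    fix z
    have "(\<Sum>k<m. g k z * (if k = i then r z else 0)) = (\<Sum>k<m. if k = i then g k z * r z else 0)"
      by (rule sum.cong) auto
    also have "\<dots> = g i z * r z" using assms(1) by simp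
    finally show "g i z * r z = (\<Sum>k<m. g k z * (if k = i then r z else 0))" by simp
  qed
qed

lemma Lam_i_carrier: "Lam_i g p q i x \<in> carrier_mat (length (p i)) (length (p i))"
  unfolding Lam_i_def by simp

lemma Lam_i_ent: "j < length (p i) \<Longrightarrow> k < length (p i) \<Longrightarrow>
  Lam_i g p q i x $$ (j,k) = (\<Sum>u\<in>UNIV. x u * coords q (\<lambda>z. g i z * (p i ! j) z * (p i ! k) z) u)"
  unfolding Lam_i_def by simp

lemma Lam_i_sym: "j < length (p i) \<Longrightarrow> k < length (p i) \<Longrightarrow>
  Lam_i g p q i x $$ (j,k) = Lam_i g p q i x $$ (k,j)"
proof -
  assume a: "j < length (p i)" "k < length (p i)"
  have "(\<lambda>z. g i z * (p i ! j) z * (p i ! k) z) = (\<lambda>z. g i z * (p i ! k) z * (p i ! j) z)"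
    by (simp add: mult_ac)
  thus ?thesis using a by (simp add: Lam_i_ent)
qed

lemma Lam_i_qf:
  assumes qb: "is_basis_fun q (Vspace g d m)" and im: "i < m"
    and pb: "\<forall>j<length (p i). poly_deg_le (d i) (p i ! j)"
  shows "qf (length (p i)) (ent (Lam_i g p q i x)) v
       = lf q x (\<lambda>z. g i z * (\<Sum>j<length (p i). v j * (p i ! j) z)^2)"
proof -
  define n where "n = length (p i)"
  define G where "G = (\<lambda>j k z. g i z * (p i ! j) z * (p i ! k) z)"
  define C where "C = (\<lambda>j k. coords q (G j k))"
  have GV: "G j k \<in> Vspace g d m" if "j < n" "k < n" for j k
  proof -
    have "poly_deg_le (d i + d i) (\<lambda>z. (p i ! j) z * (p i ! k) z)"
      using pb that by (auto simp: n_def intro!: pdl_mult)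
    hence "poly_deg_le (2 * d i) (\<lambda>z. (p i ! j) z * (p i ! k) z)" by (simp add: mult_2)
    from V_single[where g=g and d=d, OF im this] show ?thesis by (simp add: G_def mult.assoc)
  qed
  define F where "F = (\<lambda>j z. \<Sum>k<n. v k * G j k z)"
  have FV: "F j \<in> Vspace g d m" if "j < n" for j
    unfolding F_def using GV that by (intro V_sum) auto
  have eq: "(\<lambda>z. g i z * (\<Sum>j<n. v j * (p i ! j) z)^2) = (\<lambda>z. \<Sum>j<n. v j * F j z)"
    by (auto simp: F_def G_def power2_eq_square sum_product sum_distrib_left mult_ac)
  have cF: "coords q (F j) = (\<lambda>u. \<Sum>k<n. v k * C j k u)" if "j < n" for j
    unfolding F_def C_def using GV that by (intro coords_sum[OF qb]) auto
  have c: "coords q (\<lambda>z. g i z * (\<Sum>j<n. v j * (p i ! j) z)^2) = (\<lambda>u. \<Sum>j<n. v j * (\<Sum>k<n. v k * C j k u))"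
    unfolding eq using FV cF by (subst coords_sum[OF qb]) auto
  have "lf q x (\<lambda>z. g i z * (\<Sum>j<n. v j * (p i ! j) z)^2) = (\<Sum>u\<in>UNIV. \<Sum>j<n. \<Sum>k<n. v j * C j k u * x u * v k)"
    unfolding lf_def c by (simp add: sum_distrib_left mult_ac)
  also have "\<dots> = (\<Sum>j<n. \<Sum>u\<in>UNIV. \<Sum>k<n. v j * C j k u * x u * v k)" by (rule sum.swap)
  also have "\<dots> = (\<Sum>j<n. \<Sum>k<n. \<Sum>u\<in>UNIV. v j * C j k u * x u * v k)" by (rule sum.cong[OF refl], rule sum.swap)
  also have "\<dots> = qf n (ent (Lam_i g p q i x)) v"
    unfolding qf_def ent_def
    by (intro sum.cong refl) (simp add: Lam_i_ent n_def C_def G_def sum_distrib_left sum_distrib_right mult_ac)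
  finally show ?thesis by (simp add: n_def)
qed

lemma Scone_mem: assumes qb: "is_basis_fun q (Vspace g d m)" and im: "i < m" and h: "poly_deg_le (d i) h"
  shows "coords q (\<lambda>z. g i z * (h z)^2) \<in> Scone g d m q"
proof -
  have "poly_deg_le (2 * d i) (\<lambda>z. (h z)^2)"
    using pdl_mult[OF h h] by (simp add: mult_2 power2_eq_square)
  from V_single[where g=g and d=d, OF im this] have V: "(\<lambda>z. g i z * (h z)^2) \<in> Vspace g d m" .
  have "(\<lambda>z. g i z * (h z)^2) \<in> WSOS g d m"
    unfolding WSOS_def
  proof (rule CollectI, rule exI[of _ "\<lambda>k z. if k = i then (h z)^2 else 0"], intro conjI allI impI)
    fix k assume "k < m"
    show "sos_deg_le (d k) (\<lambda>z. if k = i then (h z)^2 else 0)"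
    proof (cases "k = i")
      case True thus ?thesis using h unfolding sos_deg_le_def by (auto intro!: exI[of _ "[h]"])
    next
      case False thus ?thesis unfolding sos_deg_le_def by (auto intro!: exI[of _ "[]"])
    qed
  next
    show "(\<lambda>z. g i z * (h z)^2) = (\<lambda>z. \<Sum>k<m. g k z * (if k = i then (h z)^2 else 0))"
    proof
      fix z
      have "(\<Sum>k<m. g k z * (if k = i then (h z)^2 else 0)) = (\<Sum>k<m. if k = i then g k z * (h z)^2 else 0)"
        by (rule sum.cong) auto
      also have "\<dots> = g i z * (h z)^2" using im by simp
      finally show "g i z * (h z)^2 = (\<Sum>k<m. g k z * (if k = i then (h z)^2 else 0))" by simp
    qed
  qed
  thus ?thesis unfolding Scone_def using poly_of_coords[OF qb V] by simp
qed

definition psdf :: "nat \<Rightarrow> (nat \<Rightarrow> nat \<Rightarrow> real) \<Rightarrow> bool" where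
  "psdf n M \<longleftrightarrow> (\<forall>v. qf n M v \<ge> 0)"
definition pdf :: "nat \<Rightarrow> (nat \<Rightarrow> nat \<Rightarrow> real) \<Rightarrow> bool" where
  "pdf n M \<longleftrightarrow> (\<forall>v. (\<exists>j<n. v j \<noteq> 0) \<longrightarrow> qf n M v > 0)"
definition symf :: "nat \<Rightarrow> (nat \<Rightarrow> nat \<Rightarrow> real) \<Rightarrow> bool" where
  "symf n M \<longleftrightarrow> (\<forall>i<n. \<forall>j<n. M i j = M j i)"

lemma sum_split_add: "(\<Sum>r<a+b. f r) = (\<Sum>r<a. f r) + (\<Sum>r<b. f (a + r :: nat))"
  by (induction b) (auto simp: add.assoc)

lemma qf_cong: "(\<And>i. i < n \<Longrightarrow> v i = w i) \<Longrightarrow> (\<And>i j. i < n \<Longrightarrow> j < n \<Longrightarrow> M i j = M' i j) \<Longrightarrow> qf n M v = qf n M' w"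
  unfolding qf_def by (intro sum.cong refl) auto

lemma qf_zero: "(\<And>i. i < n \<Longrightarrow> v i = 0) \<Longrightarrow> qf n M v = 0"
  unfolding qf_def by simp

lemma pdf_psdf: "pdf n M \<Longrightarrow> psdf n M"
  unfolding pdf_def psdf_def
  by (metis less_eq_real_def qf_zero)

lemma dbm_cons_ent:
  assumes A: "A \<in> carrier_mat a a" and D: "diag_block_mat As \<in> carrier_mat b b"
    and r: "r < a + b" and c: "c < a + b"
  shows "diag_block_mat (A # As) $$ (r, c) =
    (if r < a \<and> c < a then A $$ (r, c) else if a \<le> r \<and> a \<le> c then diag_block_mat As $$ (r - a, c - a) else 0)"
  using A D r c by (auto simp: Let_def)

lemma dbm_carrier: fixes B :: "nat \<Rightarrow> real mat"
  assumes "\<And>i. i \<in> set l \<Longrightarrow> B i \<in> carrier_mat (n i) (n i)"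
  shows "diag_block_mat (map B l) \<in> carrier_mat (sum_list (map n l)) (sum_list (map n l))"
proof -
  have "dim_row (diag_block_mat (map B l)) = sum_list (map n l) \<and> dim_col (diag_block_mat (map B l)) = sum_list (map n l)"
    using assms by (induction l) (auto simp: Let_def)
  thus ?thesis unfolding carrier_mat_def by simp
qed

lemma qf_block:
  assumes A: "A \<in> carrier_mat a a" and D: "diag_block_mat As \<in> carrier_mat b b"
  shows "qf (a + b) (ent (diag_block_mat (A # As))) v = qf a (ent A) v + qf b (ent (diag_block_mat As)) (\<lambda>i. v (a + i))"
proof -
  let ?M = "ent (diag_block_mat (A # As))"
  have e: "diag_block_mat (A # As) $$ (r, c) = (if r < a \<and> c < a then A $$ (r, c) else if a \<le> r \<and> a \<le> c then diag_block_mat As $$ (r - a, c - a) else 0)"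
    if "r < a + b" "c < a + b" for r c using dbm_cons_ent[OF A D that] .
  have "qf (a + b) ?M v = (\<Sum>r<a. \<Sum>c<a+b. v r * ?M r c * v c) + (\<Sum>r<b. \<Sum>c<a+b. v (a+r) * ?M (a+r) c * v c)"
    unfolding qf_def sum_split_add[where a=a and b=b] ..
  also have "(\<Sum>r<a. \<Sum>c<a+b. v r * ?M r c * v c) = (\<Sum>r<a. \<Sum>c<a. v r * ent A r c * v c)"
  proof (rule sum.cong[OF refl])
    fix r assume r: "r \<in> {..<a}"
    have "(\<Sum>c<a+b. v r * ?M r c * v c) = (\<Sum>c<a. v r * ?M r c * v c) + (\<Sum>c<b. v r * ?M r (a+c) * v (a+c))"
      unfolding sum_split_add[where a=a and b=b] ..
    also have "(\<Sum>c<b. v r * ?M r (a+c) * v (a+c)) = 0"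
      using r by (intro sum.neutral) (auto simp: e ent_def simp del: diag_block_mat.simps)
    also have "(\<Sum>c<a. v r * ?M r c * v c) = (\<Sum>c<a. v r * ent A r c * v c)"
      using r by (intro sum.cong refl) (auto simp: e ent_def simp del: diag_block_mat.simps)
    finally show "(\<Sum>c<a+b. v r * ?M r c * v c) = (\<Sum>c<a. v r * ent A r c * v c)" by simp
  qed
  also have "(\<Sum>r<b. \<Sum>c<a+b. v (a+r) * ?M (a+r) c * v c) = (\<Sum>r<b. \<Sum>c<b. v (a+r) * ent (diag_block_mat As) r c * v (a+c))"
  proof (rule sum.cong[OF refl])
    fix r assume r: "r \<in> {..<b}"
    have "(\<Sum>c<a+b. v (a+r) * ?M (a+r) c * v c) = (\<Sum>c<a. v (a+r) * ?M (a+r) c * v c) + (\<Sum>c<b. v (a+r) * ?M (a+r) (a+c) * v (a+c))"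
      unfolding sum_split_add[where a=a and b=b] ..
    also have "(\<Sum>c<a. v (a+r) * ?M (a+r) c * v c) = 0"
      using r by (intro sum.neutral) (auto simp: e ent_def simp del: diag_block_mat.simps)
    also have "(\<Sum>c<b. v (a+r) * ?M (a+r) (a+c) * v (a+c)) = (\<Sum>c<b. v (a+r) * ent (diag_block_mat As) r c * v (a+c))"
      using r by (intro sum.cong refl) (auto simp: e ent_def simp del: diag_block_mat.simps)
    finally show "(\<Sum>c<a+b. v (a+r) * ?M (a+r) c * v c) = (\<Sum>c<b. v (a+r) * ent (diag_block_mat As) r c * v (a+c))" by simp
  qed
  finally show ?thesis unfolding qf_def by simp
qed

lemma dbm_psd: fixes B :: "nat \<Rightarrow> real mat"
  assumes "\<forall>i\<in>set l. B i \<in> carrier_mat (n i) (n i)"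
  shows "(\<forall>i\<in>set l. psdf (n i) (ent (B i))) \<longleftrightarrow> psdf (sum_list (map n l)) (ent (diag_block_mat (map B l)))"
  using assms
proof (induction l)
  case Nil show ?case by (simp add: psdf_def qf_def)
next
  case (Cons a l)
  let ?b = "sum_list (map n l)"
  let ?D = "diag_block_mat (map B l)"
  have A: "B a \<in> carrier_mat (n a) (n a)" using Cons.prems by auto
  have D: "?D \<in> carrier_mat ?b ?b" using Cons.prems by (intro dbm_carrier) auto
  have qfe: "qf (n a + ?b) (ent (diag_block_mat (map B (a # l)))) v = qf (n a) (ent (B a)) v + qf ?b (ent ?D) (\<lambda>i. v (n a + i))" for v
    using qf_block[OF A D] by simp
  have IH1: "(\<forall>i\<in>set l. psdf (n i) (ent (B i))) \<longleftrightarrow> psdf ?b (ent ?D)" using Cons.IH Cons.prems by auto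
  show ?case
  proof
    assume h: "\<forall>i\<in>set (a # l). psdf (n i) (ent (B i))"
    hence "psdf ?b (ent ?D)" "psdf (n a) (ent (B a))" using IH1 by auto
    thus "psdf (sum_list (map n (a # l))) (ent (diag_block_mat (map B (a # l))))"
      unfolding psdf_def using qfe by (simp add: add_nonneg_nonneg)
  next
    assume h: "psdf (sum_list (map n (a # l))) (ent (diag_block_mat (map B (a # l))))"
    have "psdf (n a) (ent (B a))" unfolding psdf_def
    proof
      fix v :: "nat \<Rightarrow> real"
      have "qf (n a + ?b) (ent (diag_block_mat (map B (a # l)))) (\<lambda>r. if r < n a then v r else 0) \<ge> 0"
        using h by (simp add: psdf_def)
      also have "qf (n a + ?b) (ent (diag_block_mat (map B (a # l)))) (\<lambda>r. if r < n a then v r else 0) = qf (n a) (ent (B a)) v"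
        unfolding qfe by (simp add: qf_zero cong: qf_cong)
      finally show "qf (n a) (ent (B a)) v \<ge> 0" .
    qed
    moreover have "psdf ?b (ent ?D)" unfolding psdf_def
    proof
      fix v :: "nat \<Rightarrow> real"
      have "qf (n a + ?b) (ent (diag_block_mat (map B (a # l)))) (\<lambda>r. if r < n a then 0 else v (r - n a)) \<ge> 0"
        using h by (simp add: psdf_def)
      also have "qf (n a + ?b) (ent (diag_block_mat (map B (a # l)))) (\<lambda>r. if r < n a then 0 else v (r - n a)) = qf ?b (ent ?D) v"
        unfolding qfe by (simp add: qf_zero)
      finally show "qf ?b (ent ?D) v \<ge> 0" .
    qed
    ultimately show "\<forall>i\<in>set (a # l). psdf (n i) (ent (B i))" using IH1 by auto
  qed
qed

lemma dbm_pd: fixes B :: "nat \<Rightarrow> real mat"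
  assumes "\<forall>i\<in>set l. B i \<in> carrier_mat (n i) (n i)" "\<forall>i\<in>set l. pdf (n i) (ent (B i))"
  shows "pdf (sum_list (map n l)) (ent (diag_block_mat (map B l)))"
  using assms
proof (induction l)
  case Nil show ?case by (simp add: pdf_def)
next
  case (Cons a l)
  let ?b = "sum_list (map n l)"
  let ?D = "diag_block_mat (map B l)"
  have A: "B a \<in> carrier_mat (n a) (n a)" using Cons.prems by auto
  have D: "?D \<in> carrier_mat ?b ?b" using Cons.prems by (intro dbm_carrier) auto
  have qfe: "qf (n a + ?b) (ent (diag_block_mat (map B (a # l)))) v = qf (n a) (ent (B a)) v + qf ?b (ent ?D) (\<lambda>i. v (n a + i))" for v
    using qf_block[OF A D] by simp
  have pa: "pdf (n a) (ent (B a))" and pD: "pdf ?b (ent ?D)" using Cons.IH Cons.prems by auto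
  show ?case unfolding pdf_def
  proof (intro allI impI)
    fix v :: "nat \<Rightarrow> real" assume "\<exists>j<sum_list (map n (a # l)). v j \<noteq> 0"
    then obtain j where j: "j < n a + ?b" "v j \<noteq> 0" by auto
    have ge: "qf (n a) (ent (B a)) v \<ge> 0" "qf ?b (ent ?D) (\<lambda>i. v (n a + i)) \<ge> 0"
      using pdf_psdf[OF pa] pdf_psdf[OF pD] by (auto simp: psdf_def)
    show "qf (sum_list (map n (a # l))) (ent (diag_block_mat (map B (a # l)))) v > 0"
    proof (cases "j < n a")
      case True
      hence "qf (n a) (ent (B a)) v > 0" using pa j unfolding pdf_def by blast
      thus ?thesis using qfe ge by simp
    next
      case False
      hence "j - n a < ?b" "v (n a + (j - n a)) \<noteq> 0" using j by auto
      hence "\<exists>j'<?b. v (n a + j') \<noteq> 0" by blast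
      hence "qf ?b (ent ?D) (\<lambda>i. v (n a + i)) > 0" using pD[unfolded pdf_def, rule_format, of "\<lambda>i. v (n a + i)"] by simp
      thus ?thesis using qfe ge by simp
    qed
  qed
qed

lemma dbm_sym: fixes B :: "nat \<Rightarrow> real mat"
  assumes "\<forall>i\<in>set l. B i \<in> carrier_mat (n i) (n i)" "\<forall>i\<in>set l. symf (n i) (ent (B i))"
  shows "symf (sum_list (map n l)) (ent (diag_block_mat (map B l)))"
  using assms
proof (induction l)
  case Nil show ?case by (simp add: symf_def)
next
  case (Cons a l)
  let ?b = "sum_list (map n l)"
  let ?D = "diag_block_mat (map B l)"
  have A: "B a \<in> carrier_mat (n a) (n a)" using Cons.prems by auto
  have D: "?D \<in> carrier_mat ?b ?b" using Cons.prems by (intro dbm_carrier) auto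
  have sa: "symf (n a) (ent (B a))" and sD: "symf ?b (ent ?D)" using Cons.IH Cons.prems by auto
  show ?case unfolding symf_def
  proof (intro allI impI)
    fix r c assume rc: "r < sum_list (map n (a # l))" "c < sum_list (map n (a # l))"
    hence rc': "r < n a + ?b" "c < n a + ?b" by auto
    show "ent (diag_block_mat (map B (a # l))) r c = ent (diag_block_mat (map B (a # l))) c r"
      using dbm_cons_ent[OF A D rc'] dbm_cons_ent[OF A D rc'(2,1)] sa sD rc'
      by (auto simp: symf_def ent_def simp del: diag_block_mat.simps)
  qed
qed

lemma dbm_lin: fixes B :: "nat \<Rightarrow> real mat" and E :: "nat \<Rightarrow> 'u \<Rightarrow> real mat"
  assumes "\<And>i. i \<in> set l \<Longrightarrow> B i \<in> carrier_mat (n i) (n i)"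
    and "\<And>i u. i \<in> set l \<Longrightarrow> E i u \<in> carrier_mat (n i) (n i)"
    and "\<And>i j k. i \<in> set l \<Longrightarrow> j < n i \<Longrightarrow> k < n i \<Longrightarrow> B i $$ (j, k) = (\<Sum>u\<in>U. x u * E i u $$ (j, k))"
  shows "\<forall>r<sum_list (map n l). \<forall>c<sum_list (map n l).
     diag_block_mat (map B l) $$ (r, c) = (\<Sum>u\<in>U. x u * diag_block_mat (map (\<lambda>i. E i u) l) $$ (r, c))"
  using assms
proof (induction l)
  case Nil thus ?case by simp
next
  case (Cons a l)
  let ?b = "sum_list (map n l)"
  have A: "B a \<in> carrier_mat (n a) (n a)" using Cons.prems by auto
  have D: "diag_block_mat (map B l) \<in> carrier_mat ?b ?b" using Cons.prems by (intro dbm_carrier) auto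
  have EA: "E a u \<in> carrier_mat (n a) (n a)" for u using Cons.prems by auto
  have ED: "diag_block_mat (map (\<lambda>i. E i u) l) \<in> carrier_mat ?b ?b" for u using Cons.prems by (intro dbm_carrier) auto
  have IH: "\<forall>r<?b. \<forall>c<?b. diag_block_mat (map B l) $$ (r, c) = (\<Sum>u\<in>U. x u * diag_block_mat (map (\<lambda>i. E i u) l) $$ (r, c))"
    using Cons by auto
  show ?case
  proof (intro allI impI)
    fix r c assume "r < sum_list (map n (a # l))" "c < sum_list (map n (a # l))"
    hence rc: "r < n a + ?b" "c < n a + ?b" by auto
    show "diag_block_mat (map B (a # l)) $$ (r, c) = (\<Sum>u\<in>U. x u * diag_block_mat (map (\<lambda>i. E i u) (a # l)) $$ (r, c))"
      using dbm_cons_ent[OF A D rc] dbm_cons_ent[OF EA ED rc] IH Cons.prems(3)[of a r c] rc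
      by (cases "r < n a"; cases "c < n a") (auto simp del: diag_block_mat.simps)
  qed
qed

lemma sum_delta_nat: "k < (n::nat) \<Longrightarrow> (\<Sum>i<n. (if i = k then 1 else 0) * (f i :: real)) = f k"
proof -
  assume k: "k < n"
  have "(\<Sum>i<n. (if i = k then 1 else 0) * f i) = (\<Sum>i<n. if i = k then f i else 0)"
    by (rule sum.cong) auto
  also have "\<dots> = f k" using k by (simp add: sum.delta)
  finally show ?thesis .
qed

lemma qf_shift:
  assumes s: "symf n M" and k: "k < n"
  shows "qf n M (\<lambda>i. v i + c * (if i = k then 1 else 0)) = qf n M v + 2 * c * (\<Sum>j<n. v j * M k j) + c^2 * M k k"
proof -
  let ?d = "\<lambda>i::nat. (if i = k then 1 else 0 :: real)"
  have "qf n M (\<lambda>i. v i + c * ?d i) = (\<Sum>i<n. \<Sum>j<n. v i * M i j * v j + c * (?d i * (M i j * v j)) + c * (?d j * (v i * M i j)) + c^2 * (?d i * (?d j * M i j)))"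
    unfolding qf_def by (intro sum.cong refl) (simp add: algebra_simps power2_eq_square)
  also have "\<dots> = qf n M v + c * (\<Sum>i<n. ?d i * (\<Sum>j<n. M i j * v j)) + c * (\<Sum>i<n. \<Sum>j<n. ?d j * (v i * M i j)) + c^2 * (\<Sum>i<n. ?d i * (\<Sum>j<n. ?d j * M i j))"
    unfolding qf_def by (simp add: sum.distrib sum_distrib_left)
  also have "(\<Sum>i<n. ?d i * (\<Sum>j<n. M i j * v j)) = (\<Sum>j<n. v j * M k j)"
    using k by (subst sum_delta_nat) (auto simp: mult.commute)
  also have "(\<Sum>i<n. \<Sum>j<n. ?d j * (v i * M i j)) = (\<Sum>j<n. v j * M k j)"
    using k s by (simp add: sum_delta_nat symf_def)
  also have "(\<Sum>i<n. ?d i * (\<Sum>j<n. ?d j * M i j)) = M k k"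
    using k by (simp add: sum_delta_nat)
  finally show ?thesis by simp
qed

lemma psd_row_zero:
  assumes s: "symf n M" and p: "psdf n M" and k: "k < n" and z: "M k k = 0" and j: "j < n"
  shows "M k j = 0"
proof -
  have b0: "(\<Sum>j<n. v j * M k j) = 0" for v
  proof (rule ccontr)
    let ?b = "\<Sum>j<n. v j * M k j"
    assume b: "?b \<noteq> 0"
    define c where "c = - (\<bar>qf n M v\<bar> + 1) / (2 * ?b)"
    have "2 * c * ?b = - (\<bar>qf n M v\<bar> + 1)" using b by (simp add: c_def)
    hence "qf n M (\<lambda>i. v i + c * (if i = k then 1 else 0)) < 0"
      unfolding qf_shift[OF s k] z by linarith
    thus False using p by (simp add: psdf_def not_less[symmetric])
  qed
  have "(\<Sum>i<n. (if i = j then 1 else 0) * M k i) = 0" using b0[of "\<lambda>i. if i = j then 1 else 0"] by simp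
  thus ?thesis using sum_delta_nat[OF j, of "M k"] by simp
qed

lemma chol_step:
  "\<forall>M. symf n M \<and> psdf n M \<and> (\<forall>i<n. \<forall>j<n. (k \<le> i \<or> k \<le> j) \<longrightarrow> M i j = 0) \<longrightarrow>
     (\<exists>R. \<forall>i<n. \<forall>j<n. M i j = (\<Sum>a<k. R a i * R a j))"
proof (induction k)
  case 0 thus ?case by auto
next
  case (Suc k)
  show ?case
  proof (intro allI impI, elim conjE)
    fix M assume s: "symf n M" and p: "psdf n M" and supp: "\<forall>i<n. \<forall>j<n. (Suc k \<le> i \<or> Suc k \<le> j) \<longrightarrow> M i j = 0"
    show "\<exists>R. \<forall>i<n. \<forall>j<n. M i j = (\<Sum>a<Suc k. R a i * R a j)"
    proof (cases "k < n \<and> M k k \<noteq> 0")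
      case False
      have supp': "\<forall>i<n. \<forall>j<n. (k \<le> i \<or> k \<le> j) \<longrightarrow> M i j = 0"
      proof (intro allI impI)
        fix i j assume ij: "i < n" "j < n" "k \<le> i \<or> k \<le> j"
        show "M i j = 0"
        proof (cases "i = k \<or> j = k")
          case True
          hence kn: "k < n" "M k k = 0" using False ij by auto
          show ?thesis using True psd_row_zero[OF s p kn] ij s by (auto simp: symf_def)
        next
          case False thus ?thesis using supp ij by auto
        qed
      qed
      then obtain R where R: "\<forall>i<n. \<forall>j<n. M i j = (\<Sum>a<k. R a i * R a j)" using Suc.IH s p by blast
      show ?thesis by (rule exI[of _ "R(k := (\<lambda>_. 0))"]) (simp add: R)
    next
      case True
      hence kn: "k < n" and a0: "M k k \<noteq> 0" by auto
      have "0 \<le> qf n M (\<lambda>i. 0 + 1 * (if i = k then 1 else 0))" using p by (simp add: psdf_def)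
      hence "0 \<le> M k k" unfolding qf_shift[OF s kn] by (simp add: qf_def)
      hence a: "M k k > 0" using a0 by simp
      define r where "r = (\<lambda>j. M k j / sqrt (M k k))"
      define M' where "M' = (\<lambda>i j. M i j - r i * r j)"
      have rr: "r i * r j = M k i * M k j / M k k" for i j
        using a by (simp add: r_def real_sqrt_mult[symmetric])
      have s': "symf n M'" using s by (auto simp: symf_def M'_def)
      have p': "psdf n M'" unfolding psdf_def
      proof
        fix v
        let ?b = "\<Sum>j<n. v j * M k j"
        have "qf n M' v = qf n M v - (\<Sum>i<n. \<Sum>j<n. v i * (r i * r j) * v j)"
          unfolding qf_def M'_def by (simp add: algebra_simps sum_subtractf)
        also have "(\<Sum>i<n. \<Sum>j<n. v i * (r i * r j) * v j) = (\<Sum>i<n. v i * r i) * (\<Sum>j<n. v j * r j)"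
          by (simp add: sum_product mult_ac)
        also have "(\<Sum>i<n. v i * r i) = ?b / sqrt (M k k)"
          by (simp add: r_def sum_divide_distrib)
        finally have e1: "qf n M' v = qf n M v - ?b^2 / M k k"
          using a by (simp add: power2_eq_square)
        have "0 \<le> qf n M (\<lambda>i. v i + (- ?b / M k k) * (if i = k then 1 else 0))" using p by (simp add: psdf_def)
        also have "\<dots> = qf n M v - ?b^2 / M k k"
          unfolding qf_shift[OF s kn] using a by (simp add: field_simps power2_eq_square)
        finally show "0 \<le> qf n M' v" using e1 by simp
      qed
      have supp': "\<forall>i<n. \<forall>j<n. (k \<le> i \<or> k \<le> j) \<longrightarrow> M' i j = 0"
      proof (intro allI impI)
        fix i j assume ij: "i < n" "j < n" "k \<le> i \<or> k \<le> j"
        have rz: "r x = 0" if "x < n" "Suc k \<le> x" for x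
          using supp that kn s by (auto simp: r_def symf_def)
        show "M' i j = 0"
        proof (cases "i = k")
          case True thus ?thesis using a by (simp add: M'_def rr)
        next
          case ik: False
          show ?thesis
          proof (cases "j = k")
            case True thus ?thesis using a s ij by (simp add: M'_def rr symf_def)
          next
            case False
            hence "Suc k \<le> i \<or> Suc k \<le> j" using ij ik by auto
            thus ?thesis using supp ij rz by (auto simp: M'_def)
          qed
        qed
      qed
      then obtain R where R: "\<forall>i<n. \<forall>j<n. M' i j = (\<Sum>a<k. R a i * R a j)" using Suc.IH s' p' by blast
      show ?thesis
      proof (rule exI[of _ "R(k := r)"], intro allI impI)
        fix i j assume "i < n" "j < n"
        hence "M i j - r i * r j = (\<Sum>a<k. R a i * R a j)" using R by (simp add: M'_def)
        hence "M i j = (\<Sum>a<k. R a i * R a j) + r i * r j" by linarith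
        thus "M i j = (\<Sum>a<Suc k. (R(k := r)) a i * (R(k := r)) a j)" by simp
      qed
    qed
  qed
qed

lemma chol:
  assumes "symf n M" "psdf n M"
  shows "\<exists>R. \<forall>i<n. \<forall>j<n. M i j = (\<Sum>a<n. R a i * R a j)"
  using chol_step[of n n] assms by auto

lemma qf_chol:
  assumes R: "\<forall>i<n. \<forall>j<n. M i j = (\<Sum>a<K. R a i * R a j)"
  shows "qf n M v = (\<Sum>a<K. (\<Sum>i<n. R a i * v i)^2)"
proof -
  have "qf n M v = (\<Sum>i<n. \<Sum>j<n. \<Sum>a<K. (R a i * v i) * (R a j * v j))"
    unfolding qf_def using R by (intro sum.cong refl) (simp add: sum_distrib_left sum_distrib_right mult_ac)
  also have "\<dots> = (\<Sum>i<n. \<Sum>a<K. \<Sum>j<n. (R a i * v i) * (R a j * v j))"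
    by (intro sum.cong refl) (rule sum.swap)
  also have "\<dots> = (\<Sum>a<K. \<Sum>i<n. \<Sum>j<n. (R a i * v i) * (R a j * v j))"
    by (rule sum.swap)
  also have "\<dots> = (\<Sum>a<K. (\<Sum>i<n. R a i * v i)^2)"
    by (simp add: power2_eq_square sum_product)
  finally show ?thesis .
qed

lemma qf_vec: assumes "A \<in> carrier_mat n n" "v \<in> carrier_vec n"
  shows "v \<bullet> (A *\<^sub>v v) = qf n (ent A) (\<lambda>i. v $ i)"
  using assms unfolding qf_def ent_def
  by (auto simp: scalar_prod_def sum_distrib_left mult.assoc atLeast0LessThan intro!: sum.cong)

lemma transpose_symf: assumes "A \<in> carrier_mat n n"
  shows "transpose_mat A = A \<longleftrightarrow> symf n (ent A)"
proof
  assume t: "transpose_mat A = A"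
  show "symf n (ent A)" unfolding symf_def ent_def
  proof (intro allI impI)
    fix i j assume "i < n" "j < n"
    thus "A $$ (i, j) = A $$ (j, i)" using assms arg_cong[OF t, of "\<lambda>B. B $$ (i,j)"] by auto
  qed
next
  assume "symf n (ent A)"
  thus "transpose_mat A = A" using assms by (intro eq_matI) (auto simp: symf_def ent_def)
qed

lemma psd_iff: assumes A: "A \<in> carrier_mat n n"
  shows "psd A \<longleftrightarrow> symf n (ent A) \<and> psdf n (ent A)"
proof -
  have dr: "dim_row A = n" using A by auto
  have "(\<forall>v\<in>carrier_vec n. v \<bullet> (A *\<^sub>v v) \<ge> 0) \<longleftrightarrow> psdf n (ent A)"
  proof
    assume h: "\<forall>v\<in>carrier_vec n. v \<bullet> (A *\<^sub>v v) \<ge> 0"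
    show "psdf n (ent A)" unfolding psdf_def
    proof
      fix f :: "nat \<Rightarrow> real"
      have "0 \<le> vec n f \<bullet> (A *\<^sub>v vec n f)" using h by auto
      also have "\<dots> = qf n (ent A) (\<lambda>i. vec n f $ i)" using qf_vec[OF A] by auto
      also have "\<dots> = qf n (ent A) f" by (rule qf_cong) auto
      finally show "0 \<le> qf n (ent A) f" .
    qed
  next
    assume "psdf n (ent A)"
    thus "\<forall>v\<in>carrier_vec n. v \<bullet> (A *\<^sub>v v) \<ge> 0" using qf_vec[OF A] by (auto simp: psdf_def)
  qed
  thus ?thesis unfolding psd_def dr using transpose_symf[OF A] A by auto
qed

lemma pd_vec: assumes A: "A \<in> carrier_mat n n" and p: "pdf n (ent A)" and v: "v \<in> carrier_vec n" "v \<noteq> 0\<^sub>v n"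
  shows "v \<bullet> (A *\<^sub>v v) > 0"
proof -
  obtain i where "i < n" "v $ i \<noteq> 0" using v by (auto simp: vec_eq_iff)
  thus ?thesis using p qf_vec[OF A v(1)] unfolding pdf_def by auto
qed

lemma minv_facts:
  assumes L: "L \<in> carrier_mat n n" and p: "pdf n (ent L)"
  shows "minv L \<in> carrier_mat n n" "L * minv L = 1\<^sub>m n" "minv L * L = 1\<^sub>m n"
proof -
  have "det L \<noteq> 0"
  proof
    assume "det L = 0"
    then obtain v where v: "v \<in> carrier_vec n" "v \<noteq> 0\<^sub>v n" "L *\<^sub>v v = 0\<^sub>v n"
      using det_0_iff_vec_prod_zero[OF L] by auto
    have "v \<bullet> (L *\<^sub>v v) > 0" by (rule pd_vec[OF L p v(1,2)])
    thus False using v by simp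
  qed
  from det_non_zero_imp_unit[OF L this, of "()"]
  obtain B where B: "B \<in> carrier_mat n n" "B * L = 1\<^sub>m n" "L * B = 1\<^sub>m n"
    unfolding Units_def ring_mat_def by auto
  have ex: "\<exists>B. inverts_mat L B \<and> inverts_mat B L"
    using B L by (auto simp: inverts_mat_def intro!: exI[of _ B])
  have inv: "inverts_mat L (minv L) \<and> inverts_mat (minv L) L"
    unfolding minv_def by (rule someI_ex[OF ex])
  have c1: "dim_col (minv L) = n" using inv L unfolding inverts_mat_def
    by (metis index_mult_mat(3) index_one_mat(3) carrier_matD(1))
  have c2: "dim_row (minv L) = n" using inv L unfolding inverts_mat_def
    by (metis index_mult_mat(3) index_one_mat(2) index_one_mat(3) carrier_matD(2))
  show C: "minv L \<in> carrier_mat n n" using c1 c2 by auto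
  show "L * minv L = 1\<^sub>m n" using inv L unfolding inverts_mat_def by auto
  show "minv L * L = 1\<^sub>m n" using inv c2 unfolding inverts_mat_def by auto
qed

lemma minv_sym_pd:
  assumes L: "L \<in> carrier_mat n n" and s: "symf n (ent L)" and p: "pdf n (ent L)"
  shows "symf n (ent (minv L))" "pdf n (ent (minv L))"
proof -
  note mf = minv_facts[OF L p]
  let ?M = "minv L"
  have tL: "transpose_mat L = L" using transpose_symf[OF L] s by simp
  have "transpose_mat ?M * L = 1\<^sub>m n"
    using arg_cong[OF mf(2), of transpose_mat] transpose_mult[OF L mf(1)] tL by simp
  hence "transpose_mat ?M = transpose_mat ?M * (L * ?M)" using mf by simp
  also have "\<dots> = (transpose_mat ?M * L) * ?M" using mf L by (simp add: assoc_mult_mat[symmetric, of _ n n _ n _ n])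
  also have "\<dots> = ?M" using \<open>transpose_mat ?M * L = 1\<^sub>m n\<close> mf by simp
  finally show "symf n (ent ?M)" using transpose_symf[OF mf(1)] by simp
  show "pdf n (ent ?M)" unfolding pdf_def
  proof (intro allI impI)
    fix f :: "nat \<Rightarrow> real" assume "\<exists>j<n. f j \<noteq> 0"
    then obtain j where j: "j < n" "f j \<noteq> 0" by auto
    let ?v = "vec n f"
    let ?y = "?M *\<^sub>v ?v"
    have v: "?v \<in> carrier_vec n" by simp
    have y: "?y \<in> carrier_vec n" using mf by simp
    have Ly: "L *\<^sub>v ?y = ?v" using mf L by (simp flip: assoc_mult_mat_vec)
    have "?y \<noteq> 0\<^sub>v n"
    proof
      assume "?y = 0\<^sub>v n"
      moreover have "L *\<^sub>v 0\<^sub>v n = 0\<^sub>v n" using L by (intro eq_vecI) (auto simp: scalar_prod_def)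
      ultimately have "?v = 0\<^sub>v n" using Ly by simp
      thus False using j by (metis index_vec index_zero_vec(1))
    qed
    hence "?y \<bullet> (L *\<^sub>v ?y) > 0" by (rule pd_vec[OF L p y])
    also have "?y \<bullet> (L *\<^sub>v ?y) = ?v \<bullet> ?y" using Ly comm_scalar_prod[OF y v] by simp
    also have "?v \<bullet> ?y = qf n (ent ?M) (\<lambda>i. ?v $ i)" by (rule qf_vec[OF mf(1) v])
    also have "\<dots> = qf n (ent ?M) f" by (rule qf_cong) auto
    finally show "qf n (ent ?M) f > 0" .
  qed
qed

lemma psd_congr:
  assumes L: "L \<in> carrier_mat n n" and M: "M \<in> carrier_mat n n" and A: "A \<in> carrier_mat n n"
    and LM: "L * M = 1\<^sub>m n" and sM: "symf n (ent M)"
  shows "psd (M * A * M) \<longleftrightarrow> psd A"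
proof -
  have tM: "transpose_mat M = M" using transpose_symf[OF M] sM by simp
  have C: "M * A * M \<in> carrier_mat n n" using M A by simp
  have key: "v \<bullet> ((M * A * M) *\<^sub>v v) = (M *\<^sub>v v) \<bullet> (A *\<^sub>v (M *\<^sub>v v))" if v: "v \<in> carrier_vec n" for v
  proof -
    have "(M * A * M) *\<^sub>v v = (M * A) *\<^sub>v (M *\<^sub>v v)" using M A v by (simp del: assoc_mult_mat add: assoc_mult_mat_vec[of "M * A" n n M n v])
    also have "\<dots> = M *\<^sub>v (A *\<^sub>v (M *\<^sub>v v))" using M A v by simp
    finally have e1: "(M * A * M) *\<^sub>v v = M *\<^sub>v (A *\<^sub>v (M *\<^sub>v v))" .
    have "v \<bullet> ((M * A * M) *\<^sub>v v) = v \<bullet> (M *\<^sub>v (A *\<^sub>v (M *\<^sub>v v)))" using e1 by simp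
    also have "\<dots> = (transpose_mat M *\<^sub>v v) \<bullet> (A *\<^sub>v (M *\<^sub>v v))"
      using transpose_vec_mult_scalar[OF M, of "A *\<^sub>v (M *\<^sub>v v)" v] M A v by simp
    finally show ?thesis using tM by simp
  qed
  have tr: "transpose_mat (M * A * M) = M * A * M \<longleftrightarrow> transpose_mat A = A"
  proof
    assume h: "transpose_mat A = A"
    have "transpose_mat (M * A * M) = transpose_mat M * transpose_mat (M * A)"
      using transpose_mult[of "M * A" n n M n] M A by simp
    also have "\<dots> = M * (A * M)" using transpose_mult[OF M A] tM h by simp
    finally show "transpose_mat (M * A * M) = M * A * M" using M A by (simp add: assoc_mult_mat)
  next
    assume h: "transpose_mat (M * A * M) = M * A * M"
    have "A = L * (M * A * M) * L"
    proof -
      have hML: "M * L = 1\<^sub>m n" using mat_mult_left_right_inverse[OF L M LM] .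
      have MA: "M * A \<in> carrier_mat n n" using M A by simp
      have "L * (M * A * M) = (L * (M * A)) * M" using assoc_mult_mat[OF L MA M] by simp
      also have "L * (M * A) = (L * M) * A" using assoc_mult_mat[OF L M A] by simp
      also have "\<dots> = A" using LM A by simp
      finally have "L * (M * A * M) * L = A * M * L" by simp
      also have "\<dots> = A * (M * L)" using assoc_mult_mat[OF A M L] .
      also have "\<dots> = A" using hML A by simp
      finally show ?thesis by simp
    qed
    moreover have tL: "transpose_mat L = L"
    proof -
      have "transpose_mat M * transpose_mat L = 1\<^sub>m n" using arg_cong[OF LM, of transpose_mat] transpose_mult[OF L M] by simp
      hence "M * transpose_mat L = 1\<^sub>m n" using tM by simp
      have tLc: "transpose_mat L \<in> carrier_mat n n" using L by simp
      have "transpose_mat L = (L * M) * transpose_mat L" using LM tLc by simp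
      also have "\<dots> = L * (M * transpose_mat L)" using assoc_mult_mat[OF L M tLc] .
      also have "\<dots> = L" using \<open>M * transpose_mat L = 1\<^sub>m n\<close> L by simp
      finally show ?thesis .
    qed
    ultimately show "transpose_mat A = A"
    proof -
      assume Aeq: "A = L * (M * A * M) * L" and tL: "transpose_mat L = L"
      have XC: "M * A * M \<in> carrier_mat n n" using C .
      have LX: "L * (M * A * M) \<in> carrier_mat n n" using L XC by simp
      have "transpose_mat A = transpose_mat (L * (M * A * M) * L)" using Aeq by simp
      also have "\<dots> = transpose_mat L * transpose_mat (L * (M * A * M))" using transpose_mult[OF LX L] .
      also have "transpose_mat (L * (M * A * M)) = transpose_mat (M * A * M) * transpose_mat L" using transpose_mult[OF L XC] .
      also have "transpose_mat L * (transpose_mat (M * A * M) * transpose_mat L) = L * ((M * A * M) * L)" using h tL by simp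
      also have "\<dots> = L * (M * A * M) * L" using assoc_mult_mat[OF L XC L] by simp
      also have "\<dots> = A" using Aeq by simp
      finally show ?thesis .
    qed
  qed
  have qq: "(\<forall>v\<in>carrier_vec n. v \<bullet> ((M * A * M) *\<^sub>v v) \<ge> 0) \<longleftrightarrow> (\<forall>v\<in>carrier_vec n. v \<bullet> (A *\<^sub>v v) \<ge> 0)"
  proof
    assume h: "\<forall>v\<in>carrier_vec n. v \<bullet> ((M * A * M) *\<^sub>v v) \<ge> 0"
    show "\<forall>v\<in>carrier_vec n. v \<bullet> (A *\<^sub>v v) \<ge> 0"
    proof
      fix u :: "real vec" assume u: "u \<in> carrier_vec n"
      have "M *\<^sub>v (L *\<^sub>v u) = u" using mat_mult_left_right_inverse[OF L M LM] L M u by (simp flip: assoc_mult_mat_vec)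
      moreover have Lu: "L *\<^sub>v u \<in> carrier_vec n" using L u by simp
      ultimately show "u \<bullet> (A *\<^sub>v u) \<ge> 0" using h[rule_format, OF Lu] key[OF Lu] by simp
    qed
  next
    assume h: "\<forall>v\<in>carrier_vec n. v \<bullet> (A *\<^sub>v v) \<ge> 0"
    show "\<forall>v\<in>carrier_vec n. v \<bullet> ((M * A * M) *\<^sub>v v) \<ge> 0" using h key M by auto
  qed
  have dr: "dim_row (M * A * M) = n" "dim_row A = n" using C A by auto
  show ?thesis unfolding psd_def dr using C A tr qq by auto
qed

definition HopF :: "nat \<Rightarrow> (nat \<Rightarrow> nat \<Rightarrow> real) \<Rightarrow> (nat \<Rightarrow> nat \<Rightarrow> real) \<Rightarrow> (nat \<Rightarrow> nat \<Rightarrow> real) \<Rightarrow> real" where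
  "HopF n E M A = (\<Sum>i<n. \<Sum>j<n. E j i * (\<Sum>l<n. (\<Sum>k<n. M j k * A k l) * M l i))"

lemma lin1: "(\<Sum>a\<in>S. f a * (\<Sum>v\<in>U. w v * g v a)) = (\<Sum>v\<in>U. w v * (\<Sum>a\<in>S. f a * (g v a :: real)))"
proof -
  have "(\<Sum>a\<in>S. f a * (\<Sum>v\<in>U. w v * g v a)) = (\<Sum>a\<in>S. \<Sum>v\<in>U. w v * (f a * g v a))"
    by (simp add: sum_distrib_left mult_ac)
  also have "\<dots> = (\<Sum>v\<in>U. \<Sum>a\<in>S. w v * (f a * g v a))" by (rule sum.swap)
  also have "\<dots> = (\<Sum>v\<in>U. w v * (\<Sum>a\<in>S. f a * g v a))" by (simp add: sum_distrib_left)
  finally show ?thesis .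
qed

lemma lin1': "(\<Sum>a\<in>S. (\<Sum>v\<in>U. w v * g v a) * f a) = (\<Sum>v\<in>U. w v * (\<Sum>a\<in>S. g v a * (f a :: real)))"
  using lin1[of f w g U S] by (simp add: mult.commute)

lemma lin2: "(\<Sum>a\<in>S. \<Sum>b\<in>T. f a b * (\<Sum>v\<in>U. w v * g v a b)) = (\<Sum>v\<in>U. w v * (\<Sum>a\<in>S. \<Sum>b\<in>T. f a b * (g v a b :: real)))"
proof -
  have "(\<Sum>a\<in>S. \<Sum>b\<in>T. f a b * (\<Sum>v\<in>U. w v * g v a b)) = (\<Sum>a\<in>S. 1 * (\<Sum>v\<in>U. w v * (\<Sum>b\<in>T. f a b * g v a b)))"
    by (rule sum.cong[OF refl], subst lin1, simp)
  also have "\<dots> = (\<Sum>v\<in>U. w v * (\<Sum>a\<in>S. 1 * (\<Sum>b\<in>T. f a b * g v a b)))" by (rule lin1)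
  finally show ?thesis by simp
qed

lemma lin2': "(\<Sum>a\<in>S. \<Sum>b\<in>T. (\<Sum>v\<in>U. w v * g v a b) * f a b) = (\<Sum>v\<in>U. w v * (\<Sum>a\<in>S. \<Sum>b\<in>T. g v a b * (f a b :: real)))"
  using lin2[of f w g U T S] by (simp add: mult.commute)

lemma HopF_lin1: "HopF n (\<lambda>j i. \<Sum>u\<in>U. w u * E u j i) M A = (\<Sum>u\<in>U. w u * HopF n (E u) M A)"
  unfolding HopF_def by (rule lin2')

lemma swap_fact: "(\<Sum>l<n. (\<Sum>k<n. M k * A k l) * r l) = (\<Sum>k<n. M k * (\<Sum>l<n. A k l * (r l :: real)))"
proof -
  have "(\<Sum>l<n. (\<Sum>k<n. M k * A k l) * r l) = (\<Sum>l<n. \<Sum>k<n. M k * (A k l * r l))"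
    by (simp add: sum_distrib_right mult.assoc)
  also have "\<dots> = (\<Sum>k<n. \<Sum>l<n. M k * (A k l * r l))" by (rule sum.swap)
  also have "\<dots> = (\<Sum>k<n. M k * (\<Sum>l<n. A k l * r l))" by (simp add: sum_distrib_left)
  finally show ?thesis .
qed

lemma HopF_lin3: "HopF n E M (\<lambda>k l. \<Sum>v\<in>U. w v * A v k l) = (\<Sum>v\<in>U. w v * HopF n E M (A v))"
proof -
  have inner: "(\<Sum>l<n. (\<Sum>k<n. M j k * (\<Sum>v\<in>U. w v * A v k l)) * M l i)
     = (\<Sum>v\<in>U. w v * (\<Sum>l<n. (\<Sum>k<n. M j k * A v k l) * M l i))" for i j
  proof -
    have "(\<Sum>l<n. (\<Sum>k<n. M j k * (\<Sum>v\<in>U. w v * A v k l)) * M l i)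
        = (\<Sum>l<n. (\<Sum>v\<in>U. w v * (\<Sum>k<n. M j k * A v k l)) * M l i)"
      by (rule sum.cong[OF refl], rule arg_cong[where f="\<lambda>x. x * M _ i"], rule lin1)
    also have "\<dots> = (\<Sum>v\<in>U. w v * (\<Sum>l<n. (\<Sum>k<n. M j k * A v k l) * M l i))" by (rule lin1')
    finally show ?thesis .
  qed
  show ?thesis unfolding HopF_def inner by (rule lin2)
qed

lemma HopF_sos:
  assumes R: "\<forall>l<n. \<forall>i<n. M l i = (\<Sum>b<n. R b l * R b i)"
  shows "HopF n A M A = (\<Sum>b<n. qf n M (\<lambda>j. \<Sum>i<n. A j i * R b i))"
proof -
  define y where "y = (\<lambda>b j. \<Sum>i<n. A j i * R b i)"
  define z where "z = (\<lambda>b j. \<Sum>k<n. M j k * y b k)"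
  have a: "(\<Sum>l<n. (\<Sum>k<n. M j k * A k l) * M l i) = (\<Sum>b<n. R b i * z b j)" if "i < n" for i j
  proof -
    have "(\<Sum>l<n. (\<Sum>k<n. M j k * A k l) * M l i) = (\<Sum>l<n. (\<Sum>k<n. M j k * A k l) * (\<Sum>b<n. R b i * R b l))"
      using R that by (intro sum.cong refl) (simp add: mult.commute)
    also have "\<dots> = (\<Sum>b<n. R b i * (\<Sum>l<n. (\<Sum>k<n. M j k * A k l) * R b l))" by (rule lin1)
    also have "\<dots> = (\<Sum>b<n. R b i * z b j)"
      unfolding z_def y_def by (simp only: swap_fact)
    finally show ?thesis .
  qed
  have "HopF n A M A = (\<Sum>i<n. \<Sum>j<n. \<Sum>b<n. (A j i * R b i) * z b j)"
    unfolding HopF_def by (rule sum.cong[OF refl], rule sum.cong[OF refl]) (simp add: a sum_distrib_left mult.assoc)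
  also have "\<dots> = (\<Sum>j<n. \<Sum>i<n. \<Sum>b<n. (A j i * R b i) * z b j)" by (rule sum.swap)
  also have "\<dots> = (\<Sum>j<n. \<Sum>b<n. \<Sum>i<n. (A j i * R b i) * z b j)" by (rule sum.cong[OF refl], rule sum.swap)
  also have "\<dots> = (\<Sum>b<n. \<Sum>j<n. \<Sum>i<n. (A j i * R b i) * z b j)" by (rule sum.swap)
  also have "\<dots> = (\<Sum>b<n. \<Sum>j<n. y b j * z b j)"
    by (simp add: y_def sum_distrib_right)
  also have "\<dots> = (\<Sum>b<n. qf n M (y b))"
    unfolding qf_def z_def by (simp add: sum_distrib_left mult_ac)
  finally show ?thesis unfolding y_def .
qed

lemma pdf_zero: assumes "pdf n M" "qf n M v = 0" "j < n" shows "v j = 0"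
proof (rule ccontr)
  assume "v j \<noteq> 0"
  hence "qf n M v > 0" using assms(1,3) unfolding pdf_def by blast
  thus False using assms(2) by simp
qed

lemma HopF_zero:
  assumes sM: "symf n M" and pM: "pdf n M" and sA: "symf n A"
    and R: "\<forall>l<n. \<forall>i<n. M l i = (\<Sum>b<n. R b l * R b i)"
    and z: "HopF n A M A = 0"
  shows "\<forall>i<n. \<forall>j<n. A i j = 0"
proof -
  have pM': "psdf n M" using pdf_psdf[OF pM] .
  have qfR: "qf n M v = (\<Sum>a<n. (\<Sum>i<n. R a i * v i)^2)" for v
    by (rule qf_chol) (use R in auto)
  have "(\<Sum>b<n. qf n M (\<lambda>j. \<Sum>i<n. A j i * R b i)) = 0" using z HopF_sos[OF R] by simp
  moreover have "\<forall>b\<in>{..<n}. qf n M (\<lambda>j. \<Sum>i<n. A j i * R b i) \<ge> 0" using pM' by (simp add: psdf_def)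
  ultimately have q0: "qf n M (\<lambda>j. \<Sum>i<n. A j i * R b i) = 0" if "b < n" for b
    using sum_nonneg_eq_0_iff[where A="{..<n}" and f="\<lambda>b. qf n M (\<lambda>j. \<Sum>i<n. A j i * R b i)"] that by auto
  have y0: "(\<Sum>i<n. A j i * R b i) = 0" if "b < n" "j < n" for b j
    using pdf_zero[OF pM q0[OF that(1)] that(2)] by simp
  have Az: "(\<Sum>j<n. A i j * u j) = 0" if "i < n" for u i
  proof -
    let ?z = "\<lambda>i. \<Sum>j<n. A i j * u j"
    have "(\<Sum>i<n. R a i * ?z i) = 0" if "a < n" for a
    proof -
      have "(\<Sum>i<n. R a i * ?z i) = (\<Sum>i<n. \<Sum>j<n. R a i * A i j * u j)" by (simp add: sum_distrib_left mult.assoc)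
      also have "\<dots> = (\<Sum>j<n. \<Sum>i<n. R a i * A i j * u j)" by (rule sum.swap)
      also have "\<dots> = (\<Sum>j<n. u j * (\<Sum>i<n. A j i * R a i))"
        using sA by (intro sum.cong refl) (auto simp: sum_distrib_left symf_def mult_ac)
      also have "\<dots> = 0" using y0 that by simp
      finally show ?thesis .
    qed
    hence "qf n M ?z = 0" unfolding qfR by simp
    from pdf_zero[OF pM this that] show ?thesis by simp
  qed
  show ?thesis
  proof (intro allI impI)
    fix i j assume ij: "i < n" "j < n"
    have "(\<Sum>k<n. A i k * (if k = j then 1 else 0)) = 0" using Az[OF ij(1)] by simp
    thus "A i j = 0" using sum_delta_nat[OF ij(2), of "A i"] by (simp add: mult.commute)
  qed
qed

lemma top_step:
  fixes S :: "('u::finite \<Rightarrow> real) set"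
  assumes "x \<in> interior S"
  shows "\<exists>e>0. (\<lambda>u. x u + e * y u) \<in> S"
proof -
  let ?f = "\<lambda>t::real. (\<lambda>u. x u + t * y u)"
  have c: "continuous_on UNIV ?f"
    by (rule continuous_on_coordinatewise_then_product) (intro continuous_intros)
  have o: "open (?f -` interior S)" by (rule open_vimage[OF open_interior c])
  have "0 \<in> ?f -` interior S" using assms by simp
  then obtain e where e: "e > 0" "ball 0 e \<subseteq> ?f -` interior S" using o openE by blast
  have "e / 2 \<in> ball 0 e" using e by (simp add: dist_real_def)
  hence "?f (e / 2) \<in> S" using e interior_subset by blast
  thus ?thesis using e by (intro exI[of _ "e / 2"]) auto
qed

lemma coords_add: assumes qb: "is_basis_fun q V" "f \<in> V" "f' \<in> V"
  shows "coords q (\<lambda>z. f z + f' z) = (\<lambda>u. coords q f u + coords q f' u)"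
proof -
  have "poly_of q (\<lambda>u. coords q f u + coords q f' u) = (\<lambda>z. poly_of q (coords q f) z + poly_of q (coords q f') z)"
    unfolding poly_of_def by (simp add: distrib_right sum.distrib)
  also have "\<dots> = (\<lambda>z. f z + f' z)" using poly_of_coords[OF qb(1,2)] poly_of_coords[OF qb(1,3)] by simp
  finally have "poly_of q (\<lambda>u. coords q f u + coords q f' u) = (\<lambda>z. f z + f' z)" .
  from arg_cong[OF this, of "coords q"] show ?thesis unfolding coords_poly_of[OF qb(1)] by (rule sym)
qed

lemma lf_add: assumes "is_basis_fun q V" "f \<in> V" "f' \<in> V"
  shows "lf q w (\<lambda>z. f z + f' z) = lf q w f + lf q w f'"
  unfolding lf_def coords_add[OF assms] by (simp add: distrib_left sum.distrib)

lemma mult_ent: assumes "A \<in> carrier_mat n k" "B \<in> carrier_mat k p" "i < n" "j < p"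
  shows "(A * B) $$ (i, j) = (\<Sum>l<k. A $$ (i, l) * B $$ (l, j))"
  using assms by (auto simp: scalar_prod_def atLeast0LessThan intro!: sum.cong)

lemma trace_conv: assumes E: "E \<in> carrier_mat n n" and M: "M \<in> carrier_mat n n" and A: "A \<in> carrier_mat n n"
  shows "trace_mat (transpose_mat E * (M * A * M)) = HopF n (ent E) (ent M) (ent A)"
proof -
  have MA: "M * A \<in> carrier_mat n n" using M A by simp
  have MAM: "M * A * M \<in> carrier_mat n n" using MA M by simp
  have tE: "transpose_mat E \<in> carrier_mat n n" using E by simp
  have "trace_mat (transpose_mat E * (M * A * M)) = (\<Sum>i<n. (transpose_mat E * (M * A * M)) $$ (i, i))"
    unfolding trace_mat_def using tE MAM by simp
  also have "\<dots> = (\<Sum>i<n. \<Sum>j<n. E $$ (j, i) * (\<Sum>l<n. (\<Sum>k<n. M $$ (j, k) * A $$ (k, l)) * M $$ (l, i)))"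
  proof (rule sum.cong[OF refl])
    fix i assume i: "i \<in> {..<n}"
    have "(transpose_mat E * (M * A * M)) $$ (i, i) = (\<Sum>j<n. transpose_mat E $$ (i, j) * (M * A * M) $$ (j, i))"
      using mult_ent[OF tE MAM] i by simp
    also have "\<dots> = (\<Sum>j<n. E $$ (j, i) * (\<Sum>l<n. (\<Sum>k<n. M $$ (j, k) * A $$ (k, l)) * M $$ (l, i)))"
    proof (rule sum.cong[OF refl])
      fix j assume j: "j \<in> {..<n}"
      have "(M * A * M) $$ (j, i) = (\<Sum>l<n. (M * A) $$ (j, l) * M $$ (l, i))"
        using mult_ent[OF MA M] i j by simp
      also have "\<dots> = (\<Sum>l<n. (\<Sum>k<n. M $$ (j, k) * A $$ (k, l)) * M $$ (l, i))"
        using mult_ent[OF M A] j by (intro sum.cong refl) simp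
      finally show "transpose_mat E $$ (i, j) * (M * A * M) $$ (j, i) = E $$ (j, i) * (\<Sum>l<n. (\<Sum>k<n. M $$ (j, k) * A $$ (k, l)) * M $$ (l, i))"
        using E i j by simp
    qed
    finally show "(transpose_mat E * (M * A * M)) $$ (i, i) = (\<Sum>j<n. E $$ (j, i) * (\<Sum>l<n. (\<Sum>k<n. M $$ (j, k) * A $$ (k, l)) * M $$ (l, i)))" .
  qed
  finally show ?thesis unfolding HopF_def ent_def .
qed

lemma HopF_cong: "(\<And>k l. k < n \<Longrightarrow> l < n \<Longrightarrow> A k l = A' k l) \<Longrightarrow> HopF n E M A = HopF n E M A'"
  unfolding HopF_def by (intro sum.cong refl) auto

lemma HopF_cong1: "(\<And>k l. k < n \<Longrightarrow> l < n \<Longrightarrow> E k l = E' k l) \<Longrightarrow> HopF n E M A = HopF n E' M A"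
  unfolding HopF_def by (intro sum.cong refl) auto

abbreviation NN :: "(nat \<Rightarrow> 'a list) \<Rightarrow> nat \<Rightarrow> nat" where
  "NN p m \<equiv> sum_list (map (\<lambda>i. length (p i)) [0..<m])"

lemma pb_elems: assumes "is_basis_list B P" "j < length B" shows "P (B ! j)"
  using assms unfolding is_basis_list_def by auto

lemma Lam_carrier: "Lam g p q m x \<in> carrier_mat (NN p m) (NN p m)"
  unfolding Lam_def by (rule dbm_carrier) (simp add: Lam_i_carrier)

lemma unit_coord_sum: fixes u :: "'u::finite" shows "(\<Sum>v\<in>UNIV. unit_coord u v * c v) = (c u :: real)"
proof -
  have "(\<Sum>v\<in>UNIV. unit_coord u v * c v) = (\<Sum>v\<in>UNIV. if v = u then c v else 0)"
    unfolding unit_coord_def by (rule sum.cong) auto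
  also have "\<dots> = c u" by simp
  finally show ?thesis .
qed

lemma Lam_lin: "\<forall>r<NN p m. \<forall>c<NN p m. Lam g p q m x $$ (r, c) = (\<Sum>u\<in>UNIV. x u * Lam g p q m (unit_coord u) $$ (r, c))"
  unfolding Lam_def
proof (rule dbm_lin[where n="\<lambda>i. length (p i)"])
  fix i j k assume "j < length (p i)" "k < length (p i)"
  thus "Lam_i g p q i x $$ (j, k) = (\<Sum>u\<in>UNIV. x u * Lam_i g p q i (unit_coord u) $$ (j, k))"
    by (simp add: Lam_i_ent unit_coord_sum)
qed (auto simp: Lam_i_carrier)

lemma Lam_sym: "symf (NN p m) (ent (Lam g p q m x))"
  unfolding Lam_def
  by (rule dbm_sym) (auto simp: Lam_i_carrier symf_def ent_def intro: Lam_i_sym)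

lemma Lam_psdf_iff: "psdf (NN p m) (ent (Lam g p q m w)) \<longleftrightarrow> (\<forall>i<m. psdf (length (p i)) (ent (Lam_i g p q i w)))"
  unfolding Lam_def using dbm_psd[of "[0..<m]" "\<lambda>i. Lam_i g p q i w" "\<lambda>i. length (p i)"]
  by (auto simp: Lam_i_carrier)

lemma hv_pdl: assumes "\<forall>j<length B. poly_deg_le d (B ! j)"
  shows "poly_deg_le d (\<lambda>z. \<Sum>j<length B. v j * (B ! j) z)"
  using assms by (intro pdl_sum pdl_scale) auto

lemma Sdual_imp_block:
  assumes qb: "is_basis_fun q (Vspace g d m)" and pb: "\<forall>i<m. is_basis_list (p i) (poly_deg_le (d i))"
    and w: "w \<in> Sdual g d m q" and i: "i < m"
  shows "psdf (length (p i)) (ent (Lam_i g p q i w))"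
  unfolding psdf_def
proof
  fix v
  have pe: "\<forall>j<length (p i). poly_deg_le (d i) (p i ! j)" using pb i pb_elems by blast
  let ?h = "\<lambda>z. \<Sum>j<length (p i). v j * (p i ! j) z"
  have "coords q (\<lambda>z. g i z * (?h z)^2) \<in> Scone g d m q"
    by (rule Scone_mem[OF qb i hv_pdl[OF pe]])
  hence "0 \<le> lf q w (\<lambda>z. g i z * (?h z)^2)" using w unfolding Sdual_def lf_def by auto
  also have "\<dots> = qf (length (p i)) (ent (Lam_i g p q i w)) v"
    using Lam_i_qf[where p=p and d=d and g=g and i=i, OF qb i pe] by simp
  finally show "0 \<le> qf (length (p i)) (ent (Lam_i g p q i w)) v" .
qed

lemma block_imp_lf:
  assumes qb: "is_basis_fun q (Vspace g d m)" and pb: "\<forall>i<m. is_basis_list (p i) (poly_deg_le (d i))"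
    and ps: "psdf (length (p i)) (ent (Lam_i g p q i w))" and i: "i < m" and h: "poly_deg_le (d i) h"
  shows "lf q w (\<lambda>z. g i z * (h z)^2) \<ge> 0"
proof -
  have pe: "\<forall>j<length (p i). poly_deg_le (d i) (p i ! j)" using pb i pb_elems by blast
  obtain c where c: "h = (\<lambda>z. \<Sum>j<length (p i). c j * (p i ! j) z)"
    using pb i h unfolding is_basis_list_def by blast
  have "lf q w (\<lambda>z. g i z * (h z)^2) = qf (length (p i)) (ent (Lam_i g p q i w)) c"
    unfolding c using Lam_i_qf[where p=p and d=d and g=g and i=i, OF qb i pe] by simp
  thus ?thesis using ps by (simp add: psdf_def)
qed

lemma block_imp_lf_sos:
  assumes qb: "is_basis_fun q (Vspace g d m)" and pb: "\<forall>i<m. is_basis_list (p i) (poly_deg_le (d i))"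
    and ps: "psdf (length (p i)) (ent (Lam_i g p q i w))" and i: "i < m"
  shows "(\<forall>h\<in>set hs. poly_deg_le (d i) h) \<Longrightarrow> lf q w (\<lambda>z. g i z * (\<Sum>h\<leftarrow>hs. (h z)^2)) \<ge> 0"
proof (induction hs)
  case Nil
  have "lf q w (\<lambda>z. 0) = 0"
  proof -
    have "coords q (\<lambda>z. 0) = (\<lambda>u. 0)" using coords_poly_of[OF qb, of "\<lambda>u. 0"] by (simp add: poly_of_def)
    thus ?thesis by (simp add: lf_def)
  qed
  thus ?case by simp
next
  case (Cons h hs)
  have hp: "poly_deg_le (d i) h" and hsp: "\<forall>h\<in>set hs. poly_deg_le (d i) h" using Cons.prems by auto
  have sq: "poly_deg_le (2 * d i) (\<lambda>z. (h z)^2)"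
    using pdl_mult[OF hp hp] by (simp add: mult_2 power2_eq_square)
  have rest: "poly_deg_le (2 * d i) (\<lambda>z. \<Sum>h\<leftarrow>hs. (h z)^2)"
    using hsp by (intro pdl_sum_list) (auto simp: mult_2 power2_eq_square intro: pdl_mult)
  have V1: "(\<lambda>z. g i z * (h z)^2) \<in> Vspace g d m" by (rule V_single[where g=g and d=d, OF i sq])
  have V2: "(\<lambda>z. g i z * (\<Sum>h\<leftarrow>hs. (h z)^2)) \<in> Vspace g d m" by (rule V_single[where g=g and d=d, OF i rest])
  have "(\<lambda>z. g i z * (\<Sum>h\<leftarrow>h # hs. (h z)^2)) = (\<lambda>z. g i z * (h z)^2 + g i z * (\<Sum>h\<leftarrow>hs. (h z)^2))"
    by (simp add: distrib_left)
  hence "lf q w (\<lambda>z. g i z * (\<Sum>h\<leftarrow>h # hs. (h z)^2)) = lf q w (\<lambda>z. g i z * (h z)^2) + lf q w (\<lambda>z. g i z * (\<Sum>h\<leftarrow>hs. (h z)^2))"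
    using lf_add[OF qb V1 V2] by simp
  moreover have "lf q w (\<lambda>z. g i z * (h z)^2) \<ge> 0" by (rule block_imp_lf[OF qb pb ps i hp])
  moreover have "lf q w (\<lambda>z. g i z * (\<Sum>h\<leftarrow>hs. (h z)^2)) \<ge> 0" using Cons.IH hsp by simp
  ultimately show ?case by simp
qed

lemma Sdual_iff:
  assumes qb: "is_basis_fun q (Vspace g d m)" and pb: "\<forall>i<m. is_basis_list (p i) (poly_deg_le (d i))"
  shows "w \<in> Sdual g d m q \<longleftrightarrow> psd (Lam g p q m w)"
proof -
  have "psd (Lam g p q m w) \<longleftrightarrow> (\<forall>i<m. psdf (length (p i)) (ent (Lam_i g p q i w)))"
    using psd_iff[OF Lam_carrier] Lam_sym Lam_psdf_iff by blast
  also have "\<dots> \<longleftrightarrow> w \<in> Sdual g d m q"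
  proof
    assume "w \<in> Sdual g d m q"
    thus "\<forall>i<m. psdf (length (p i)) (ent (Lam_i g p q i w))" using Sdual_imp_block[OF qb pb] by blast
  next
    assume bl: "\<forall>i<m. psdf (length (p i)) (ent (Lam_i g p q i w))"
    show "w \<in> Sdual g d m q" unfolding Sdual_def
    proof (rule CollectI, rule ballI)
      fix s assume "s \<in> Scone g d m q"
      hence "poly_of q s \<in> WSOS g d m" by (simp add: Scone_def)
      then obtain \<sigma> where \<sigma>: "\<forall>i<m. sos_deg_le (d i) (\<sigma> i)" "poly_of q s = (\<lambda>z. \<Sum>i<m. g i z * \<sigma> i z)"
        unfolding WSOS_def by blast
      have FV: "(\<lambda>z. g i z * \<sigma> i z) \<in> Vspace g d m" if "i < m" for i
        using V_single[where g=g and d=d, OF that sos_pdl] \<sigma>(1) that by blast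
      have "(\<Sum>u\<in>UNIV. w u * s u) = lf q w (poly_of q s)" unfolding lf_def coords_poly_of[OF qb] ..
      also have "\<dots> = lf q w (\<lambda>z. \<Sum>i<m. 1 * (g i z * \<sigma> i z))" using \<sigma>(2) by simp
      also have "\<dots> = (\<Sum>u\<in>UNIV. w u * (\<Sum>i<m. 1 * coords q (\<lambda>z. g i z * \<sigma> i z) u))"
        unfolding lf_def using coords_sum[OF qb, of "{..<m}" "\<lambda>i z. g i z * \<sigma> i z" "\<lambda>_. 1"] FV by simp
      also have "\<dots> = (\<Sum>i<m. lf q w (\<lambda>z. g i z * \<sigma> i z))"
        unfolding lf_def by (simp add: sum_distrib_left sum.swap[of _ UNIV])
      also have "\<dots> \<ge> 0"
      proof (rule sum_nonneg)
        fix i assume i: "i \<in> {..<m}"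
        obtain hs where hs: "\<forall>h\<in>set hs. poly_deg_le (d i) h" "\<sigma> i = (\<lambda>z. \<Sum>h\<leftarrow>hs. (h z)\<^sup>2)"
          using \<sigma>(1) i unfolding sos_deg_le_def by auto
        show "lf q w (\<lambda>z. g i z * \<sigma> i z) \<ge> 0"
          unfolding hs(2) using block_imp_lf_sos[OF qb pb _ _ hs(1)] bl i by auto
      qed
      finally show "(\<Sum>u\<in>UNIV. w u * s u) \<ge> 0" .
    qed
  qed
  finally show ?thesis by simp
qed

lemma sq_sum_zero: fixes s :: "'u::finite \<Rightarrow> real"
  assumes "(\<Sum>u\<in>UNIV. s u * s u) \<le> 0" shows "s = (\<lambda>u. 0)"
proof -
  have "(\<Sum>u\<in>UNIV. s u * s u) = 0" using assms sum_nonneg[of UNIV "\<lambda>u. s u * s u"] by simp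
  hence "\<forall>u\<in>UNIV. s u * s u = 0" using sum_nonneg_eq_0_iff[where A=UNIV and f="\<lambda>u. s u * s u"] by simp
  thus ?thesis by auto
qed

lemma qf_ent_zero: assumes "\<forall>r<n. \<forall>c<n. A $$ (r, c) = 0" shows "qf n (ent A) v = 0"
proof -
  have "qf n (ent A) v = qf n (\<lambda>_ _. 0) v" using assms by (intro qf_cong) (auto simp: ent_def)
  thus ?thesis by (simp add: qf_def)
qed

lemma Lam_inj:
  assumes qb: "is_basis_fun q (Vspace g d m)" and pb: "\<forall>i<m. is_basis_list (p i) (poly_deg_le (d i))"
    and proper: "proper_cone (Scone g d m q)"
    and z: "\<forall>r<NN p m. \<forall>c<NN p m. Lam g p q m w $$ (r, c) = 0"
  shows "w = (\<lambda>u. 0)"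
proof -
  have z': "\<forall>r<NN p m. \<forall>c<NN p m. Lam g p q m (\<lambda>u. - w u) $$ (r, c) = 0"
  proof (intro allI impI)
    fix r c assume rc: "r < NN p m" "c < NN p m"
    have "Lam g p q m (\<lambda>u. - w u) $$ (r, c) = - (\<Sum>u\<in>UNIV. w u * Lam g p q m (unit_coord u) $$ (r, c))"
      using Lam_lin[of p m g q "\<lambda>u. - w u"] rc by (simp add: sum_negf)
    also have "\<dots> = - Lam g p q m w $$ (r, c)" using Lam_lin[of p m g q w] rc by simp
    finally show "Lam g p q m (\<lambda>u. - w u) $$ (r, c) = 0" using z rc by simp
  qed
  have "psd (Lam g p q m w)" unfolding psd_iff[OF Lam_carrier] using Lam_sym qf_ent_zero[OF z] by (simp add: psdf_def)
  moreover have "psd (Lam g p q m (\<lambda>u. - w u))" unfolding psd_iff[OF Lam_carrier] using Lam_sym qf_ent_zero[OF z'] by (simp add: psdf_def)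
  ultimately have d1: "w \<in> Sdual g d m q" and d2: "(\<lambda>u. - w u) \<in> Sdual g d m q" using Sdual_iff[OF qb pb] by auto
  have orth: "(\<Sum>u\<in>UNIV. w u * s u) = 0" if "s \<in> Scone g d m q" for s
  proof -
    have "(\<Sum>u\<in>UNIV. w u * s u) \<ge> 0" using d1 that unfolding Sdual_def mem_Collect_eq by (rule bspec)
    moreover have "(\<Sum>u\<in>UNIV. - w u * s u) \<ge> 0" using d2 that unfolding Sdual_def mem_Collect_eq by (rule bspec)
    ultimately show ?thesis by (simp add: sum_negf)
  qed
  have "interior (Scone g d m q) \<noteq> {}" using proper unfolding proper_cone_def by (elim conjE)
  then obtain s0 where s0: "s0 \<in> interior (Scone g d m q)" by blast
  obtain e where e: "e > 0" "(\<lambda>u. s0 u + e * (- w u)) \<in> Scone g d m q" using top_step[OF s0, of "\<lambda>u. - w u"] by blast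
  have "0 = (\<Sum>u\<in>UNIV. w u * (s0 u + e * (- w u)))" using orth[OF e(2)] by simp
  also have "\<dots> = (\<Sum>u\<in>UNIV. w u * s0 u) - e * (\<Sum>u\<in>UNIV. w u * w u)"
    by (simp add: algebra_simps sum.distrib sum_distrib_left sum_subtractf)
  also have "(\<Sum>u\<in>UNIV. w u * s0 u) = 0" using orth s0 interior_subset by blast
  finally have "(\<Sum>u\<in>UNIV. w u * w u) = 0" using e(1) by simp
  thus ?thesis using sq_sum_zero[of w] by simp
qed

lemma Lam_pd:
  assumes g_poly: "\<forall>i<m. is_poly (g i) \<and> g i \<noteq> (\<lambda>z. 0)"
    and qb: "is_basis_fun q (Vspace g d m)" and pb: "\<forall>i<m. is_basis_list (p i) (poly_deg_le (d i))"
    and x_int: "x \<in> interior (Sdual g d m q)"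
  shows "pdf (NN p m) (ent (Lam g p q m x))"
proof -
  have blocks: "\<forall>i<m. pdf (length (p i)) (ent (Lam_i g p q i x))"
  proof (intro allI impI)
    fix i assume i: "i < m"
    show "pdf (length (p i)) (ent (Lam_i g p q i x))" unfolding pdf_def
    proof (intro allI impI)
      fix v :: "nat \<Rightarrow> real" assume "\<exists>j<length (p i). v j \<noteq> 0"
      then obtain j where j: "j < length (p i)" "v j \<noteq> 0" by blast
      have pe: "\<forall>j<length (p i). poly_deg_le (d i) (p i ! j)" using pb i pb_elems by blast
      define h where "h = (\<lambda>z. \<Sum>j<length (p i). v j * (p i ! j) z)"
      define F where "F = (\<lambda>z. g i z * (h z)^2)"
      have hp: "poly_deg_le (d i) h" unfolding h_def by (rule hv_pdl[OF pe])
      have hnz: "h \<noteq> (\<lambda>z. 0)"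
      proof
        assume "h = (\<lambda>z. 0)"
        hence "\<forall>j<length (p i). v j = 0" using pb i unfolding is_basis_list_def h_def by blast
        thus False using j by auto
      qed
      obtain dg where dg: "poly_deg_le dg (g i)" using g_poly i is_poly_def by blast
      have gh: "is_poly (\<lambda>z. g i z * h z)" using pdl_mult[OF dg hp] is_poly_def by blast
      have hpoly: "is_poly h" using hp is_poly_def by blast
      have "(\<lambda>z. g i z * h z) \<noteq> (\<lambda>z. 0)" using poly_fun_mult_nz[of "g i" h] g_poly i hpoly hnz by blast
      hence "(\<lambda>z. (g i z * h z) * h z) \<noteq> (\<lambda>z. 0)" using poly_fun_mult_nz[OF gh hpoly] hnz by blast
      hence Fnz: "F \<noteq> (\<lambda>z. 0)" unfolding F_def by (simp add: power2_eq_square mult.assoc)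
      define s where "s = coords q F"
      have sS: "s \<in> Scone g d m q" unfolding s_def F_def by (rule Scone_mem[OF qb i hp])
      have sq: "poly_deg_le (2 * d i) (\<lambda>z. (h z)^2)" using pdl_mult[OF hp hp] by (simp add: mult_2 power2_eq_square)
      have FV: "F \<in> Vspace g d m" unfolding F_def by (rule V_single[where g=g and d=d, OF i sq])
      have snz: "s \<noteq> (\<lambda>u. 0)"
      proof
        assume "s = (\<lambda>u. 0)"
        hence "F = poly_of q (\<lambda>u. 0)" using poly_of_coords[OF qb FV] s_def by simp
        thus False using Fnz by (simp add: poly_of_def)
      qed
      have xS: "x \<in> Sdual g d m q" using x_int interior_subset by blast
      have qfe: "qf (length (p i)) (ent (Lam_i g p q i x)) v = (\<Sum>u\<in>UNIV. x u * s u)"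
        using Lam_i_qf[where p=p and d=d and g=g and i=i, OF qb i pe] by (simp add: lf_def s_def F_def h_def)
      have ge: "(\<Sum>u\<in>UNIV. x u * s u) \<ge> 0" using xS sS unfolding Sdual_def mem_Collect_eq by (rule bspec)
      have "(\<Sum>u\<in>UNIV. x u * s u) \<noteq> 0"
      proof
        assume xs0: "(\<Sum>u\<in>UNIV. x u * s u) = 0"
        obtain e where e: "e > 0" "(\<lambda>u. x u + e * (- s u)) \<in> Sdual g d m q" using top_step[OF x_int, of "\<lambda>u. - s u"] by blast
        have "0 \<le> (\<Sum>u\<in>UNIV. (x u + e * (- s u)) * s u)" using e(2) sS unfolding Sdual_def mem_Collect_eq by (rule bspec)
        also have "\<dots> = (\<Sum>u\<in>UNIV. x u * s u) - e * (\<Sum>u\<in>UNIV. s u * s u)"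
          by (simp add: algebra_simps sum.distrib sum_distrib_left sum_subtractf)
        finally have "e * (\<Sum>u\<in>UNIV. s u * s u) \<le> 0" using xs0 by simp
        hence "(\<Sum>u\<in>UNIV. s u * s u) \<le> 0" using e(1) by (simp add: mult_le_0_iff)
        thus False using sq_sum_zero snz by blast
      qed
      thus "qf (length (p i)) (ent (Lam_i g p q i x)) v > 0" using qfe ge by simp
    qed
  qed
  show ?thesis unfolding Lam_def by (rule dbm_pd) (use blocks in \<open>auto simp: Lam_i_carrier\<close>)
qed

lemma Hop_conv:
  assumes pd: "pdf (NN p m) (ent (Lam g p q m x))"
  shows "Hop g p q m x w u = HopF (NN p m) (ent (Lam g p q m (unit_coord u))) (ent (minv (Lam g p q m x))) (ent (Lam g p q m w))"
proof -
  have Mi: "minv (Lam g p q m x) \<in> carrier_mat (NN p m) (NN p m)" using minv_facts[OF Lam_carrier pd] by simp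
  show ?thesis unfolding Hop_def Lam_adj_def
    by (rule trace_conv[OF Lam_carrier Mi Lam_carrier])
qed

lemma Hop_lin:
  assumes pd: "pdf (NN p m) (ent (Lam g p q m x))"
  shows "Hop g p q m x w u = (\<Sum>v\<in>UNIV. w v * Hop g p q m x (unit_coord v) u)"
proof -
  have "Hop g p q m x w u = HopF (NN p m) (ent (Lam g p q m (unit_coord u))) (ent (minv (Lam g p q m x)))
          (\<lambda>k l. \<Sum>v\<in>UNIV. w v * ent (Lam g p q m (unit_coord v)) k l)"
    unfolding Hop_conv[OF pd] using Lam_lin[of p m g q w] by (intro HopF_cong) (simp add: ent_def)
  also have "\<dots> = (\<Sum>v\<in>UNIV. w v * Hop g p q m x (unit_coord v) u)"
    unfolding HopF_lin3 Hop_conv[OF pd] ..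
  finally show ?thesis .
qed

lemma Hop_inj:
  assumes g_poly: "\<forall>i<m. is_poly (g i) \<and> g i \<noteq> (\<lambda>z. 0)"
    and proper: "proper_cone (Scone g d m q)"
    and qb: "is_basis_fun q (Vspace g d m)" and pb: "\<forall>i<m. is_basis_list (p i) (poly_deg_le (d i))"
    and x_int: "x \<in> interior (Sdual g d m q)"
    and z: "Hop g p q m x w = (\<lambda>u. 0)"
  shows "w = (\<lambda>u. 0)"
proof -
  let ?N = "NN p m"
  let ?L = "Lam g p q m x"
  let ?M = "ent (minv ?L)"
  let ?A = "ent (Lam g p q m w)"
  have pd: "pdf ?N (ent ?L)" by (rule Lam_pd[OF g_poly qb pb x_int])
  have sM: "symf ?N ?M" and pM: "pdf ?N ?M" using minv_sym_pd[OF Lam_carrier Lam_sym pd] by auto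
  obtain R where R: "\<forall>i<?N. \<forall>j<?N. ?M i j = (\<Sum>a<?N. R a i * R a j)"
    using chol[OF sM pdf_psdf[OF pM]] by blast
  have "0 = (\<Sum>u\<in>UNIV. w u * Hop g p q m x w u)" using z by simp
  also have "\<dots> = (\<Sum>u\<in>UNIV. w u * HopF ?N (ent (Lam g p q m (unit_coord u))) ?M ?A)"
    unfolding Hop_conv[OF pd] ..
  also have "\<dots> = HopF ?N (\<lambda>j i. \<Sum>u\<in>UNIV. w u * ent (Lam g p q m (unit_coord u)) j i) ?M ?A"
    by (rule HopF_lin1[symmetric])
  also have "\<dots> = HopF ?N ?A ?M ?A"
    using Lam_lin[of p m g q w] by (intro HopF_cong1) (simp add: ent_def)
  finally have "HopF ?N ?A ?M ?A = 0" by simp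
  from HopF_zero[OF sM pM Lam_sym R this]
  have "\<forall>r<?N. \<forall>c<?N. Lam g p q m w $$ (r, c) = 0" by (simp add: ent_def)
  thus ?thesis by (rule Lam_inj[OF qb pb proper])
qed

lemma Hinv_ok:
  fixes g :: "nat \<Rightarrow> ('n::finite \<Rightarrow> real) \<Rightarrow> real"
    and q :: "'u::finite \<Rightarrow> ('n \<Rightarrow> real) \<Rightarrow> real"
  assumes g_poly: "\<forall>i<m. is_poly (g i) \<and> g i \<noteq> (\<lambda>z. 0)"
    and proper: "proper_cone (Scone g d m q)"
    and qb: "is_basis_fun q (Vspace g d m)" and pb: "\<forall>i<m. is_basis_list (p i) (poly_deg_le (d i))"
    and x_int: "x \<in> interior (Sdual g d m q)"
  shows "Hop g p q m x (Hinv g p q m x s) = s"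
proof -
  have pd: "pdf (NN p m) (ent (Lam g p q m x))" by (rule Lam_pd[OF g_poly qb pb x_int])
  define K where "K = (\<lambda>u v. Hop g p q m x (unit_coord v) u)"
  have HK: "Hop g p q m x w = (\<lambda>u. \<Sum>v\<in>UNIV. w v * K u v)" for w
    unfolding K_def by (rule ext) (rule Hop_lin[OF pd])
  define T where "T = (\<lambda>y::real^'u. \<chi> u. \<Sum>v\<in>UNIV. y $ v * K u v)"
  have lin: "linear T"
  proof (rule linearI)
    fix y y' :: "real^'u"
    show "T (y + y') = T y + T y'" unfolding T_def by (simp add: Finite_Cartesian_Product.vec_eq_iff distrib_right sum.distrib)
  next
    fix c :: real and y :: "real^'u"
    show "T (c *\<^sub>R y) = c *\<^sub>R T y" unfolding T_def by (simp add: Finite_Cartesian_Product.vec_eq_iff sum_distrib_left mult.assoc)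
  qed
  have inj: "inj T"
    unfolding linear_injective_0[OF lin]
  proof (intro allI impI)
    fix y :: "real^'u" assume "T y = 0"
    hence "Hop g p q m x (\<lambda>v. y $ v) = (\<lambda>u. 0)" unfolding HK T_def by (auto simp: Finite_Cartesian_Product.vec_eq_iff)
    hence "(\<lambda>v. y $ v) = (\<lambda>u. 0)" by (rule Hop_inj[OF g_poly proper qb pb x_int])
    thus "y = 0" by (simp add: Finite_Cartesian_Product.vec_eq_iff fun_eq_iff)
  qed
  obtain y where y: "T y = (\<chi> u. s u)" using linear_inj_imp_surj[OF lin inj] by (metis surjD)
  have ex: "Hop g p q m x (\<lambda>v. y $ v) = s"
  proof
    fix u show "Hop g p q m x (\<lambda>v. y $ v) u = s u"
      using arg_cong[OF y, of "\<lambda>z. z $ u"] unfolding HK T_def by simp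
  qed
  have uniq: "w = (\<lambda>v. y $ v)" if "Hop g p q m x w = s" for w
  proof -
    have "Hop g p q m x (\<lambda>v. w v - y $ v) = (\<lambda>u. 0)"
      using that ex unfolding HK by (auto simp: fun_eq_iff left_diff_distrib sum_subtractf)
    hence "(\<lambda>v. w v - y $ v) = (\<lambda>u. 0)" by (rule Hop_inj[OF g_poly proper qb pb x_int])
    thus ?thesis by (auto simp: fun_eq_iff)
  qed
  have "Hop g p q m x (THE w. Hop g p q m x w = s) = s"
    by (rule theI[of "\<lambda>w. Hop g p q m x w = s", OF ex]) (rule uniq)
  thus ?thesis unfolding Hinv_def .
qed

theorem theorem1:
  fixes g :: "nat \<Rightarrow> ('n::finite \<Rightarrow> real) \<Rightarrow> real"
    and d :: "nat \<Rightarrow> nat" and m :: nat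
    and q :: "'u::finite \<Rightarrow> ('n \<Rightarrow> real) \<Rightarrow> real"
    and p :: "nat \<Rightarrow> (('n \<Rightarrow> real) \<Rightarrow> real) list"
    and x s :: "'u \<Rightarrow> real"
  assumes g_poly: "\<forall>i<m. is_poly (g i) \<and> g i \<noteq> (\<lambda>z. 0)"
    and proper: "proper_cone (Scone g d m q)"
    and q_basis: "is_basis_fun q (Vspace g d m)"
    and p_basis: "\<forall>i<m. is_basis_list (p i) (poly_deg_le (d i))"
    and x_int: "x \<in> interior (Sdual g d m q)"
  shows "Lam_adj g p q m (Smat g p q m x s) = s \<and>
         (s \<in> Scone g d m q \<longrightarrow>
            (Hinv g p q m x s \<in> Sdual g d m q \<longleftrightarrow> psd (Smat g p q m x s)))"
proof (intro conjI impI)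
  have "Lam_adj g p q m (Smat g p q m x s) = Hop g p q m x (Hinv g p q m x s)"
    unfolding Smat_def Hop_def ..
  thus "Lam_adj g p q m (Smat g p q m x s) = s"
    using Hinv_ok[OF g_poly proper q_basis p_basis x_int] by simp
  let ?L = "Lam g p q m x"
  let ?w = "Hinv g p q m x s"
  have pd: "pdf (NN p m) (ent ?L)" by (rule Lam_pd[OF g_poly q_basis p_basis x_int])
  note mf = minv_facts[OF Lam_carrier pd]
  have sM: "symf (NN p m) (ent (minv ?L))" using minv_sym_pd[OF Lam_carrier Lam_sym pd] by auto
  have "Hinv g p q m x s \<in> Sdual g d m q \<longleftrightarrow> psd (Lam g p q m ?w)" by (rule Sdual_iff[OF q_basis p_basis])
  also have "\<dots> \<longleftrightarrow> psd (minv ?L * Lam g p q m ?w * minv ?L)"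
    by (rule psd_congr[OF Lam_carrier mf(1) Lam_carrier mf(2) sM, symmetric])
  finally show "Hinv g p q m x s \<in> Sdual g d m q \<longleftrightarrow> psd (Smat g p q m x s)"
    unfolding Smat_def .
qed

end
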